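(* Let $\nu>0$, $b\ge0$, $a,c\in\mathbb{R}$, $x_0^2:=a^2+4\nu b$, and $k_m\ge0$, $\omega_m>0$ fixed. Let $D^\infty=\{(\omega,k):\omega_m\le|\omega|<+\infty,\ k_m\le|k|<+\infty\}$. For small overlap $L>0$, the Robin best approximation problem $$\inf_{p\in\mathbb{C}}\sup_{(\omega,k)\in D^\infty}|\rho(\omega,k,p,0,L)|$$ has a unique solution $(p_{0,\infty}^*(L),\delta_{0,\infty}^*(L))$ (minimizer and minimal value), and as $L\to0$ $$p_{0,\infty}^*(L)\sim\frac12\sqrt[3]{\frac{\nu A^2}{L}},\qquad \delta_{0,\infty}^*(L)\sim 1-\frac{A}{2p_{0,\infty}^*(L)},$$ with $A$ the constant defined in the context.
   Context: This concerns the optimized Schwarz waveform relaxation algorithm for $\partial_t u+(a,c)\cdot\nabla u-\nu\Delta u+bu=f$ on $\mathbb{R}^2$, decomposed into $\Omega_1=(-\infty,L)\times\mathbb{R}$ and $\Omega_2=(0,\infty)\times\mathbb{R}$ ($L\ge0$ the overlap), with transmission operators $(\nu\nabla-\tfrac{(a,c)^T}{2})\cdot n_i+\tfrac{s}{2}$, $s=p+q(\partial_t+c\partial_y-\nu\Delta_y)$; its convergence factor in Fourier variables $(\omega,k)$ is $$\rho(\omega,k,p,q,L)=\frac{p+q(\nu k^2+i(\omega+ck))-\sqrt{x_0^2+4\nu(\nu k^2+i(\omega+ck))}}{p+q(\nu k^2+i(\omega+ck))+\sqrt{x_0^2+4\nu(\nu k^2+i(\omega+ck))}}\,e^{-\frac{L}{2\nu}\sqrt{x_0^2+4\nu(\nu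 k^2+i(\omega+ck))}},$$ with $\sqrt{\cdot}$ the branch with positive real part; Robin conditions correspond to $q=0$. Define $$\bar k=|c|\frac{\sqrt{(c^2+x_0^2)^2+16\nu^2\omega_m^2}-(c^2+x_0^2)}{8\nu^2\omega_m},\qquad \varphi(k,\xi)=2\sqrt2\sqrt{\sqrt{(x_0^2+4\nu^2k^2)^2+16\nu^2\xi^2}+x_0^2+4\nu^2k^2},$$ and $A=\varphi(\bar k,-\omega_m+|c|\bar k)$ if $k_m\le\bar k$; $A=\varphi(k_m,-\omega_m+|c|k_m)$ if $\bar k\le k_m\le\omega_m/|c|$; $A=\varphi(k_m,0)$ if $k_m\ge\omega_m/|c|$. Standing assumption: either $x_0^2+4\nu^2k_m^2\ne0$ or $\omega_m\ne0$. $\sim$ denotes asymptotic equivalence as $L\to0$. *)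

theory Defs
  imports "HOL-Analysis.Analysis" "HOL-Library.Landau_Symbols"
begin

text \<open>Convergence factor rho(omega,k,p,q,L); x0sq stands for x_0^2.
  csqrt is the principal branch (positive real part off the negative real axis).\<close>
definition rho :: "real \<Rightarrow> real \<Rightarrow> real \<Rightarrow> real \<Rightarrow> real \<Rightarrow> complex \<Rightarrow> complex \<Rightarrow> real \<Rightarrow> complex" where
  "rho \<nu> c x0sq \<omega> k p q L =
     (let z = complex_of_real (\<nu> * k\<^sup>2) + \<i> * complex_of_real (\<omega> + c * k);
          r = csqrt (complex_of_real x0sq + 4 * complex_of_real \<nu> * z)
      in ((p + q * z - r) / (p + q * z + r)) * exp (- complex_of_real (L / (2 * \<nu>)) * r))"

definition Dinf :: "real \<Rightarrow> real \<Rightarrow> (real \<times> real) set" where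
  "Dinf \<omega>m km = {(\<omega>, k). \<omega>m \<le> \<bar>\<omega>\<bar> \<and> km \<le> \<bar>k\<bar>}"

definition robin_sup :: "real \<Rightarrow> real \<Rightarrow> real \<Rightarrow> real \<Rightarrow> real \<Rightarrow> real \<Rightarrow> complex \<Rightarrow> ereal" where
  "robin_sup \<nu> c x0sq \<omega>m km L p =
     (SUP wk \<in> Dinf \<omega>m km. ereal (cmod (rho \<nu> c x0sq (fst wk) (snd wk) p 0 L)))"

definition kbar :: "real \<Rightarrow> real \<Rightarrow> real \<Rightarrow> real \<Rightarrow> real" where
  "kbar \<nu> c x0sq \<omega>m =
     \<bar>c\<bar> * (sqrt ((c\<^sup>2 + x0sq)\<^sup>2 + 16 * \<nu>\<^sup>2 * \<omega>m\<^sup>2) - (c\<^sup>2 + x0sq)) / (8 * \<nu>\<^sup>2 * \<omega>m)"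

definition phi :: "real \<Rightarrow> real \<Rightarrow> real \<Rightarrow> real \<Rightarrow> real" where
  "phi \<nu> x0sq k \<xi> =
     2 * sqrt 2 * sqrt (sqrt ((x0sq + 4 * \<nu>\<^sup>2 * k\<^sup>2)\<^sup>2 + 16 * \<nu>\<^sup>2 * \<xi>\<^sup>2) + x0sq + 4 * \<nu>\<^sup>2 * k\<^sup>2)"

text \<open>The constant A. When c = 0 we read omega_m/|c| as +infinity, so the third case never applies.\<close>
definition Aconst :: "real \<Rightarrow> real \<Rightarrow> real \<Rightarrow> real \<Rightarrow> real \<Rightarrow> real" where
  "Aconst \<nu> c x0sq \<omega>m km =
     (let kb = kbar \<nu> c x0sq \<omega>m in
      if km \<le> kb then phi \<nu> x0sq kb (- \<omega>m + \<bar>c\<bar> * kb)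
      else if c = 0 \<or> km \<le> \<omega>m / \<bar>c\<bar> then phi \<nu> x0sq km (- \<omega>m + \<bar>c\<bar> * km)
      else phi \<nu> x0sq km 0)"

end

theory Submission
  imports Defs "HOL-Real_Asymp.Real_Asymp"
begin

locale osw =
  fixes \<nu> c x0sq \<omega>m km :: real
  assumes nu_pos: "\<nu> > 0" and x0_nn: "x0sq \<ge> 0" and km_nn: "km \<ge> 0" and wm_pos: "\<omega>m > 0"
begin

definition sv :: "real \<Rightarrow> real \<Rightarrow> complex" where
  "sv \<omega> k = complex_of_real x0sq + 4 * complex_of_real \<nu> * (complex_of_real (\<nu> * k\<^sup>2) + \<i> * complex_of_real (\<omega> + c * k))"

definition rr :: "real \<Rightarrow> real \<Rightarrow> complex" where "rr \<omega> k = csqrt (sv \<omega> k)"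

lemma Re_sv: "Re (sv \<omega> k) = x0sq + 4 * \<nu>\<^sup>2 * k\<^sup>2"
  by (simp add: sv_def power2_eq_square)
lemma Im_sv: "Im (sv \<omega> k) = 4 * \<nu> * (\<omega> + c * k)"
  by (simp add: sv_def)

lemma rho_eq: "rho \<nu> c x0sq \<omega> k p 0 L = ((p - rr \<omega> k) / (p + rr \<omega> k)) * exp (- complex_of_real (L / (2 * \<nu>)) * rr \<omega> k)"
  by (simp add: rho_def rr_def sv_def Let_def)

lemma norm_rho: "cmod (rho \<nu> c x0sq \<omega> k p 0 L) = cmod (p - rr \<omega> k) / cmod (p + rr \<omega> k) * exp (- (L / (2 * \<nu>)) * Re (rr \<omega> k))"
  by (simp add: rho_eq norm_mult norm_divide norm_exp_eq_Re)

lemma XY_rel: "(Re (rr \<omega> k))\<^sup>2 - (Im (rr \<omega> k))\<^sup>2 = x0sq + 4 * \<nu>\<^sup>2 * k\<^sup>2"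
proof -
  have "(rr \<omega> k)\<^sup>2 = sv \<omega> k" by (simp add: rr_def)
  hence "Re ((rr \<omega> k)\<^sup>2) = x0sq + 4 * \<nu>\<^sup>2 * k\<^sup>2" by (simp add: Re_sv)
  thus ?thesis by (simp add: power2_eq_square)
qed

lemma XY_rel2: "2 * Re (rr \<omega> k) * Im (rr \<omega> k) = 4 * \<nu> * (\<omega> + c * k)"
proof -
  have "(rr \<omega> k)\<^sup>2 = sv \<omega> k" by (simp add: rr_def)
  hence "Im ((rr \<omega> k)\<^sup>2) = 4 * \<nu> * (\<omega> + c * k)" by (simp add: Im_sv)
  thus ?thesis by (simp add: power2_eq_square)
qed

lemma Y_le_X: "(Im (rr \<omega> k))\<^sup>2 \<le> (Re (rr \<omega> k))\<^sup>2"
  using XY_rel[of \<omega> k] x0_nn by (smt (verit) zero_le_power2 mult_nonneg_nonneg nu_pos)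

lemma Re_rr: "Re (rr \<omega> k) = sqrt ((cmod (sv \<omega> k) + Re (sv \<omega> k)) / 2)"
  by (simp add: rr_def)


lemma cmod_sv: "cmod (sv \<omega> k) = sqrt ((x0sq + 4 * \<nu>\<^sup>2 * k\<^sup>2)\<^sup>2 + 16 * \<nu>\<^sup>2 * (\<omega> + c * k)\<^sup>2)"
  unfolding cmod_def Re_sv Im_sv by (simp add: power_mult_distrib)

lemma X_pos: assumes "(\<omega>, k) \<in> Dinf \<omega>m km" shows "Re (rr \<omega> k) > 0"
proof -
  have w: "\<omega>m \<le> \<bar>\<omega>\<bar>" using assms by (simp add: Dinf_def)
  have "cmod (sv \<omega> k) + Re (sv \<omega> k) > 0"
  proof (cases "k = 0")
    case True
    hence "Im (sv \<omega> k) \<noteq> 0" using w wm_pos nu_pos by (simp add: Im_sv)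
    hence "cmod (sv \<omega> k) > \<bar>Re (sv \<omega> k)\<bar>"
      unfolding cmod_def by (metis abs_of_nonneg real_sqrt_abs real_sqrt_less_iff less_add_same_cancel1 zero_less_power2 zero_le_power2 real_sqrt_ge_zero)
    thus ?thesis by linarith
  next
    case False
    hence "Re (sv \<omega> k) > 0" using x0_nn nu_pos by (simp add: Re_sv add_nonneg_pos)
    moreover have "cmod (sv \<omega> k) \<ge> 0" by simp
    ultimately show ?thesis by linarith
  qed
  thus ?thesis by (simp add: Re_rr)
qed

lemma phi_eq: assumes "k'\<^sup>2 = k\<^sup>2" "(\<omega> + c * k)\<^sup>2 = \<xi>\<^sup>2"
  shows "phi \<nu> x0sq k' \<xi> = 4 * Re (rr \<omega> k)"
proof -
  have "Re (rr \<omega> k) = sqrt ((sqrt ((x0sq + 4 * \<nu>\<^sup>2 * k'\<^sup>2)\<^sup>2 + 16 * \<nu>\<^sup>2 * \<xi>\<^sup>2) + x0sq + 4 * \<nu>\<^sup>2 * k'\<^sup>2) / 2)"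
    using assms by (simp add: Re_rr cmod_sv Re_sv add.assoc)
  moreover have "\<And>v. 4 * sqrt (v / 2) = 2 * sqrt 2 * sqrt v"
    by (simp add: real_sqrt_divide field_simps)
  ultimately show ?thesis by (simp add: phi_def)
qed

end

lemma quad_main:
  fixes Y C k0 km wm :: real
  assumes Y: "Y > 0" and C: "C \<ge> 0" and wm: "wm > 0" and Ck0: "C * k0 \<le> wm"
    and H: "\<And>K. K \<ge> km \<Longrightarrow> C * K \<le> wm \<Longrightarrow> K\<^sup>2 + (wm - C*K)\<^sup>2 / Y \<ge> k0\<^sup>2 + (wm - C*k0)\<^sup>2 / Y"
    and kmC: "C > 0 \<Longrightarrow> C * km \<le> wm"
    and K: "K \<ge> km" "km \<ge> 0" and xi: "wm - C * K \<le> \<bar>\<xi>\<bar>"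
  shows "K\<^sup>2 + \<xi>\<^sup>2 / Y \<ge> k0\<^sup>2 + (wm - C*k0)\<^sup>2 / Y"
proof (cases "C * K \<le> wm")
  case True
  have "0 \<le> wm - C*K" using True by simp
  hence "(wm - C*K)\<^sup>2 \<le> \<bar>\<xi>\<bar>\<^sup>2" using xi by (intro power_mono) auto
  hence "(wm - C*K)\<^sup>2 \<le> \<xi>\<^sup>2" by simp
  hence "(wm - C*K)\<^sup>2 / Y \<le> \<xi>\<^sup>2 / Y" using Y by (simp add: divide_right_mono)
  thus ?thesis using H[OF K(1) True] by linarith
next
  case False
  have Cp: "C > 0"
  proof (rule ccontr)
    assume "\<not> C > 0" hence "C = 0" using C by simp
    thus False using False wm by simp
  qed
  have "wm / C \<ge> km" using kmC[OF Cp] Cp by (simp add: field_simps)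
  moreover have "C * (wm / C) \<le> wm" using Cp by simp
  ultimately have h: "(wm/C)\<^sup>2 + (wm - C*(wm/C))\<^sup>2 / Y \<ge> k0\<^sup>2 + (wm - C*k0)\<^sup>2 / Y" using H by blast
  have "wm / C < K" using False Cp by (simp add: field_simps)
  hence "(wm/C)\<^sup>2 \<le> K\<^sup>2" using wm Cp by (intro power_mono) auto
  moreover have "\<xi>\<^sup>2 / Y \<ge> 0" using Y by simp
  ultimately show ?thesis using h Cp by simp
qed

lemma quad_incr:
  fixes Y C k0 wm K :: real
  assumes Y: "Y > 0" and C: "C \<ge> 0" and k0: "k0 \<ge> 0" and st: "k0 * (Y + C\<^sup>2) \<ge> C * wm" and K: "K \<ge> k0"
  shows "K\<^sup>2 + (wm - C*K)\<^sup>2 / Y \<ge> k0\<^sup>2 + (wm - C*k0)\<^sup>2 / Y"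
proof -
  have "(K\<^sup>2 + (wm - C*K)\<^sup>2 / Y) - (k0\<^sup>2 + (wm - C*k0)\<^sup>2 / Y) = (K - k0) * ((K + k0) * (Y + C\<^sup>2) - 2 * C * wm) / Y"
    using Y by (simp add: field_simps power2_eq_square)
  moreover have "(K - k0) * ((K + k0) * (Y + C\<^sup>2) - 2 * C * wm) \<ge> 0"
  proof -
    have "(K + k0) * (Y + C\<^sup>2) \<ge> 2 * k0 * (Y + C\<^sup>2)" using K Y by (intro mult_right_mono) auto
    thus ?thesis using K st by (intro mult_nonneg_nonneg) auto
  qed
  ultimately show ?thesis using Y by (smt (verit) divide_nonneg_pos)
qed

lemma quad_stat:
  fixes Y C k0 wm K :: real
  assumes Y: "Y > 0" and st: "k0 * (Y + C\<^sup>2) = C * wm"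
  shows "K\<^sup>2 + (wm - C*K)\<^sup>2 / Y \<ge> k0\<^sup>2 + (wm - C*k0)\<^sup>2 / Y"
proof -
  have "(K\<^sup>2 + (wm - C*K)\<^sup>2 / Y) - (k0\<^sup>2 + (wm - C*k0)\<^sup>2 / Y) = (K - k0) * ((K + k0) * (Y + C\<^sup>2) - 2 * C * wm) / Y"
    using Y by (simp add: field_simps power2_eq_square)
  also have "(K + k0) * (Y + C\<^sup>2) - 2 * C * wm = (K - k0) * (Y + C\<^sup>2)"
    using st by (simp add: algebra_simps)
  hence "(K - k0) * ((K + k0) * (Y + C\<^sup>2) - 2 * C * wm) / Y = (K - k0)\<^sup>2 * (Y + C\<^sup>2) / Y"
    by (simp add: power2_eq_square)
  finally show ?thesis using Y by (smt (verit) divide_nonneg_pos zero_le_power2 mult_nonneg_nonneg)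
qed

context osw begin

lemma Re_ge_of_quad:
  assumes X0: "X0 > 0" and q: "x0sq + 4 * \<nu>\<^sup>2 * k\<^sup>2 + 4 * \<nu>\<^sup>2 * (\<omega> + c*k)\<^sup>2 / X0\<^sup>2 \<ge> X0\<^sup>2"
  shows "Re (rr \<omega> k) \<ge> X0"
proof (rule ccontr)
  define X where "X = Re (rr \<omega> k)"
  define Y where "Y = Im (rr \<omega> k)"
  assume "\<not> X0 \<le> Re (rr \<omega> k)"
  hence lt: "X < X0" by (simp add: X_def)
  have X0': "X \<ge> 0" unfolding X_def rr_def by (rule Re_csqrt)
  have e1: "X\<^sup>2 - Y\<^sup>2 = x0sq + 4 * \<nu>\<^sup>2 * k\<^sup>2" using XY_rel by (simp add: X_def Y_def)
  have e2: "X * Y = 2 * \<nu> * (\<omega> + c*k)" using XY_rel2[of \<omega> k] unfolding X_def Y_def by linarith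
  have "4 * \<nu>\<^sup>2 * (\<omega> + c*k)\<^sup>2 = (X*Y)\<^sup>2" using e2 by (simp add: power_mult_distrib)
  hence "X\<^sup>2 - Y\<^sup>2 + (X*Y)\<^sup>2 / X0\<^sup>2 \<ge> X0\<^sup>2" using q e1 by simp
  hence "(X\<^sup>2 - Y\<^sup>2 + (X*Y)\<^sup>2 / X0\<^sup>2) * X0\<^sup>2 \<ge> X0\<^sup>2 * X0\<^sup>2"
    by (intro mult_right_mono) auto
  moreover have "(X\<^sup>2 - Y\<^sup>2 + (X*Y)\<^sup>2 / X0\<^sup>2) * X0\<^sup>2 = (X\<^sup>2 - Y\<^sup>2) * X0\<^sup>2 + (X*Y)\<^sup>2"
    using X0 by (simp add: distrib_right)
  moreover have "(X0\<^sup>2 - X\<^sup>2) * (X0\<^sup>2 + Y\<^sup>2) = X0\<^sup>2 * X0\<^sup>2 - ((X\<^sup>2 - Y\<^sup>2) * X0\<^sup>2 + (X*Y)\<^sup>2)"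
    by (simp add: algebra_simps power2_eq_square)
  ultimately have le: "(X0\<^sup>2 - X\<^sup>2) * (X0\<^sup>2 + Y\<^sup>2) \<le> 0" by linarith
  have "X\<^sup>2 < X0\<^sup>2" using lt X0' by (simp add: power_strict_mono)
  hence "(X0\<^sup>2 - X\<^sup>2) * (X0\<^sup>2 + Y\<^sup>2) > 0" using X0 by (intro mult_pos_pos) (auto simp: add_pos_nonneg)
  thus False using le by linarith
qed

lemma witness_eq:
  assumes X0: "Re (rr \<omega> k) = X0" "X0 > 0"
  shows "x0sq + 4 * \<nu>\<^sup>2 * k\<^sup>2 + 4 * \<nu>\<^sup>2 * (\<omega> + c*k)\<^sup>2 / X0\<^sup>2 = X0\<^sup>2"
proof -
  define Y where "Y = Im (rr \<omega> k)"
  have e1: "X0\<^sup>2 - Y\<^sup>2 = x0sq + 4 * \<nu>\<^sup>2 * k\<^sup>2" using XY_rel[of \<omega> k] X0 by (simp add: Y_def)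
  have e2: "X0 * Y = 2 * \<nu> * (\<omega> + c*k)" using XY_rel2[of \<omega> k] X0 unfolding Y_def by (simp add: algebra_simps)
  have "4 * \<nu>\<^sup>2 * (\<omega> + c*k)\<^sup>2 = (X0*Y)\<^sup>2" using e2 by (simp add: power_mult_distrib)
  thus ?thesis using e1 X0 by (simp add: power_mult_distrib)
qed

lemma lower_general:
  assumes w0: "(\<omega>0, k0) \<in> Dinf \<omega>m km" and X0: "Re (rr \<omega>0 k0) = X0"
    and Q: "\<And>K \<xi>. K \<ge> km \<Longrightarrow> \<omega>m - \<bar>c\<bar> * K \<le> \<bar>\<xi>\<bar> \<Longrightarrow> K\<^sup>2 + \<xi>\<^sup>2 / X0\<^sup>2 \<ge> k0\<^sup>2 + (\<omega>0 + c*k0)\<^sup>2 / X0\<^sup>2"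
    and w: "(\<omega>, k) \<in> Dinf \<omega>m km"
  shows "Re (rr \<omega> k) \<ge> X0"
proof -
  have X0p: "X0 > 0" using X_pos[OF w0] X0 by simp
  have wk: "\<omega>m \<le> \<bar>\<omega>\<bar>" "km \<le> \<bar>k\<bar>" using w by (auto simp: Dinf_def)
  have "\<bar>\<omega> + c*k\<bar> \<ge> \<bar>\<omega>\<bar> - \<bar>c\<bar> * \<bar>k\<bar>" by (simp add: abs_mult[symmetric])
  hence "\<omega>m - \<bar>c\<bar> * \<bar>k\<bar> \<le> \<bar>\<omega> + c*k\<bar>" using wk by linarith
  from Q[OF wk(2) this] have "\<bar>k\<bar>\<^sup>2 + (\<omega> + c*k)\<^sup>2 / X0\<^sup>2 \<ge> k0\<^sup>2 + (\<omega>0 + c*k0)\<^sup>2 / X0\<^sup>2" by simp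
  hence "k\<^sup>2 + (\<omega> + c*k)\<^sup>2 / X0\<^sup>2 \<ge> k0\<^sup>2 + (\<omega>0 + c*k0)\<^sup>2 / X0\<^sup>2" by simp
  hence "4*\<nu>\<^sup>2 * (k\<^sup>2 + (\<omega> + c*k)\<^sup>2 / X0\<^sup>2) \<ge> 4*\<nu>\<^sup>2 * (k0\<^sup>2 + (\<omega>0 + c*k0)\<^sup>2 / X0\<^sup>2)"
    by (simp add: mult_left_mono)
  hence "x0sq + 4 * \<nu>\<^sup>2 * k\<^sup>2 + 4 * \<nu>\<^sup>2 * (\<omega> + c*k)\<^sup>2 / X0\<^sup>2 \<ge> x0sq + 4 * \<nu>\<^sup>2 * k0\<^sup>2 + 4 * \<nu>\<^sup>2 * (\<omega>0 + c*k0)\<^sup>2 / X0\<^sup>2"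
    by (simp add: algebra_simps)
  also have "x0sq + 4 * \<nu>\<^sup>2 * k0\<^sup>2 + 4 * \<nu>\<^sup>2 * (\<omega>0 + c*k0)\<^sup>2 / X0\<^sup>2 = X0\<^sup>2" by (rule witness_eq[OF X0 X0p])
  finally show ?thesis by (rule Re_ge_of_quad[OF X0p])
qed

end

lemma kbar_facts:
  fixes \<nu> c x0sq wm :: real
  assumes nu: "\<nu> > 0" and x0: "x0sq \<ge> 0" and wm: "wm > 0"
  defines "C \<equiv> \<bar>c\<bar>" and "\<beta> \<equiv> c\<^sup>2 + x0sq"
  shows "kbar \<nu> c x0sq wm \<ge> 0"
    and "4 * \<nu>\<^sup>2 * wm * (kbar \<nu> c x0sq wm)\<^sup>2 + C * \<beta> * kbar \<nu> c x0sq wm - C\<^sup>2 * wm = 0"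
    and "kbar \<nu> c x0sq wm = 0 \<longleftrightarrow> C = 0"
proof -
  define R where "R = sqrt (\<beta>\<^sup>2 + 16 * \<nu>\<^sup>2 * wm\<^sup>2)"
  have b0: "\<beta> \<ge> 0" using x0 by (simp add: \<beta>_def)
  have R2: "R\<^sup>2 = \<beta>\<^sup>2 + 16 * \<nu>\<^sup>2 * wm\<^sup>2" by (simp add: R_def)
  have "\<beta>\<^sup>2 < \<beta>\<^sup>2 + 16 * \<nu>\<^sup>2 * wm\<^sup>2" using nu wm by simp
  hence Rb: "R > \<beta>" unfolding R_def using b0 by (metis abs_of_nonneg real_sqrt_abs real_sqrt_less_iff)
  have kb: "kbar \<nu> c x0sq wm = C * (R - \<beta>) / (8 * \<nu>\<^sup>2 * wm)"
    by (simp add: kbar_def C_def \<beta>_def R_def)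
  show "kbar \<nu> c x0sq wm \<ge> 0" unfolding kb using Rb nu wm by (simp add: C_def)
  show "kbar \<nu> c x0sq wm = 0 \<longleftrightarrow> C = 0" unfolding kb using Rb nu wm by simp
  have "4 * \<nu>\<^sup>2 * wm * (C * (R - \<beta>) / (8 * \<nu>\<^sup>2 * wm))\<^sup>2 + C * \<beta> * (C * (R - \<beta>) / (8 * \<nu>\<^sup>2 * wm)) - C\<^sup>2 * wm
      = C\<^sup>2 * (R\<^sup>2 - \<beta>\<^sup>2 - 16 * \<nu>\<^sup>2 * wm\<^sup>2) / (16 * \<nu>\<^sup>2 * wm)"
    using nu wm by (simp add: field_simps power2_eq_square)
  also have "\<dots> = 0" using R2 by simp
  finally show "4 * \<nu>\<^sup>2 * wm * (kbar \<nu> c x0sq wm)\<^sup>2 + C * \<beta> * kbar \<nu> c x0sq wm - C\<^sup>2 * wm = 0"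
    unfolding kb .
qed


lemma root_le:
  fixes y a q T :: real
  assumes y: "y > 0" and ey: "y\<^sup>2 - a * y - q = 0" and q: "q \<ge> 0" and T: "T \<ge> 0" and eT: "T\<^sup>2 - a * T - q \<le> 0"
  shows "T \<le> y"
proof (rule ccontr)
  assume "\<not> T \<le> y" hence Ty: "T > y" by simp
  have "y - a = q / y" using ey y by (simp add: field_simps power2_eq_square)
  hence "y - a \<ge> 0" using q y by simp
  hence "T + y - a > 0" using Ty y by linarith
  hence "(T - y) * (T + y - a) > 0" using Ty by simp
  moreover have "(T - y) * (T + y - a) = (T\<^sup>2 - a * T - q) - (y\<^sup>2 - a * y - q)" by (simp add: algebra_simps power2_eq_square)
  ultimately show False using ey eT by linarith
qed

lemma T_identity:
  fixes \<nu> C x0sq wm k0 :: real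
  assumes "k0 \<noteq> 0"
  shows "(C * (wm - C*k0) / k0)\<^sup>2 - (x0sq + 4 * \<nu>\<^sup>2 * k0\<^sup>2) * (C * (wm - C*k0) / k0) - 4 * \<nu>\<^sup>2 * (wm - C*k0)\<^sup>2
     = - (wm - C*k0) * (4 * \<nu>\<^sup>2 * wm * k0\<^sup>2 + C * (C\<^sup>2 + x0sq) * k0 - C\<^sup>2 * wm) / k0\<^sup>2"
  using assms by (simp add: field_simps power2_eq_square)

context osw begin

lemma witness_poly:
  assumes X0: "Re (rr \<omega> k) = X0" "X0 > 0"
  shows "(X0\<^sup>2)\<^sup>2 - (x0sq + 4 * \<nu>\<^sup>2 * k\<^sup>2) * X0\<^sup>2 - 4 * \<nu>\<^sup>2 * (\<omega> + c*k)\<^sup>2 = 0"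
proof -
  have e: "x0sq + 4 * \<nu>\<^sup>2 * k\<^sup>2 + 4 * \<nu>\<^sup>2 * (\<omega> + c*k)\<^sup>2 / X0\<^sup>2 = X0\<^sup>2" by (rule witness_eq[OF X0])
  have "(x0sq + 4 * \<nu>\<^sup>2 * k\<^sup>2 + 4 * \<nu>\<^sup>2 * (\<omega> + c*k)\<^sup>2 / X0\<^sup>2) * X0\<^sup>2 = (x0sq + 4 * \<nu>\<^sup>2 * k\<^sup>2) * X0\<^sup>2 + 4 * \<nu>\<^sup>2 * (\<omega> + c*k)\<^sup>2"
    using X0 by (simp add: distrib_right)
  hence "X0\<^sup>2 * X0\<^sup>2 = (x0sq + 4 * \<nu>\<^sup>2 * k\<^sup>2) * X0\<^sup>2 + 4 * \<nu>\<^sup>2 * (\<omega> + c*k)\<^sup>2" using e by simp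
  thus ?thesis by (simp add: power2_eq_square)
qed


definition sg :: real where "sg = (if c \<ge> 0 then 1 else -1)"

lemma sg_c: "c * sg = \<bar>c\<bar>" and sg_sq: "sg\<^sup>2 = 1"
  by (auto simp: sg_def)

lemma case12:
  assumes k0: "k0 \<ge> km" "\<bar>c\<bar> * k0 \<le> \<omega>m" and kmC: "\<bar>c\<bar> > 0 \<Longrightarrow> \<bar>c\<bar> * km \<le> \<omega>m"
    and H: "\<And>K. K \<ge> km \<Longrightarrow> \<bar>c\<bar> * K \<le> \<omega>m \<Longrightarrow> K\<^sup>2 + (\<omega>m - \<bar>c\<bar> * K)\<^sup>2 / (Re (rr (-\<omega>m) (sg*k0)))\<^sup>2 \<ge> k0\<^sup>2 + (\<omega>m - \<bar>c\<bar> * k0)\<^sup>2 / (Re (rr (-\<omega>m) (sg*k0)))\<^sup>2"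
  shows "(-\<omega>m, sg*k0) \<in> Dinf \<omega>m km" and "\<And>\<omega> k. (\<omega>, k) \<in> Dinf \<omega>m km \<Longrightarrow> Re (rr \<omega> k) \<ge> Re (rr (-\<omega>m) (sg*k0))"
proof -
  have k0n: "k0 \<ge> 0" using k0 km_nn by simp
  show D0: "(-\<omega>m, sg*k0) \<in> Dinf \<omega>m km" using k0 k0n wm_pos by (auto simp: Dinf_def sg_def abs_mult)
  define X0 where "X0 = Re (rr (-\<omega>m) (sg*k0))"
  have X0p: "X0 > 0" using X_pos[OF D0] by (simp add: X0_def)
  have xi0: "(-\<omega>m + c * (sg*k0))\<^sup>2 = (\<omega>m - \<bar>c\<bar> * k0)\<^sup>2"
  proof -
    have h: "c * (sg*k0) = \<bar>c\<bar> * k0" by (metis mult.assoc sg_c)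
    have "(-\<omega>m + c * (sg*k0))\<^sup>2 = (-\<omega>m + \<bar>c\<bar> * k0)\<^sup>2" by (simp only: h)
    also have "\<dots> = (\<omega>m - \<bar>c\<bar> * k0)\<^sup>2" by (simp add: power2_eq_square algebra_simps)
    finally show ?thesis .
  qed
  have sq: "(sg*k0)\<^sup>2 = k0\<^sup>2" using sg_sq by (simp add: power_mult_distrib)
  fix \<omega> k assume w: "(\<omega>, k) \<in> Dinf \<omega>m km"
  show "Re (rr \<omega> k) \<ge> Re (rr (-\<omega>m) (sg*k0))"
  proof (rule lower_general[OF D0 refl _ w])
    fix K \<xi> assume K: "K \<ge> km" "\<omega>m - \<bar>c\<bar> * K \<le> \<bar>\<xi>\<bar>"
    have "K\<^sup>2 + \<xi>\<^sup>2 / (X0\<^sup>2) \<ge> k0\<^sup>2 + (\<omega>m - \<bar>c\<bar> * k0)\<^sup>2 / (X0\<^sup>2)"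
      by (rule quad_main[where km=km]) (use X0p wm_pos k0 kmC H K km_nn in \<open>auto simp: X0_def\<close>)
    thus "K\<^sup>2 + \<xi>\<^sup>2 / (Re (rr (-\<omega>m) (sg*k0)))\<^sup>2 \<ge> (sg*k0)\<^sup>2 + (-\<omega>m + c * (sg*k0))\<^sup>2 / (Re (rr (-\<omega>m) (sg*k0)))\<^sup>2"
      unfolding xi0 sq X0_def .
  qed
qed


lemma A_char:
  "\<exists>\<omega>0 k0. (\<omega>0, k0) \<in> Dinf \<omega>m km \<and> 4 * Re (rr \<omega>0 k0) = Aconst \<nu> c x0sq \<omega>m km \<and>
      (\<forall>\<omega> k. (\<omega>, k) \<in> Dinf \<omega>m km \<longrightarrow> 4 * Re (rr \<omega> k) \<ge> Aconst \<nu> c x0sq \<omega>m km)"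
proof -
  define C where "C = \<bar>c\<bar>"
  define kb where "kb = kbar \<nu> c x0sq \<omega>m"
  have kb0: "kb \<ge> 0" and kbP: "4 * \<nu>\<^sup>2 * \<omega>m * kb\<^sup>2 + C * (c\<^sup>2 + x0sq) * kb - C\<^sup>2 * \<omega>m = 0"
    and kbz: "kb = 0 \<longleftrightarrow> C = 0"
    using kbar_facts[OF nu_pos x0_nn wm_pos, of c] by (simp_all add: kb_def C_def)
  have C0: "C \<ge> 0" by (simp add: C_def)
  have cC: "c\<^sup>2 = C\<^sup>2" by (simp add: C_def)
  have kbP': "4 * \<nu>\<^sup>2 * \<omega>m * kb\<^sup>2 + C * (C\<^sup>2 + x0sq) * kb - C\<^sup>2 * \<omega>m = 0" using kbP cC by simp
  have Ckb: "C\<^sup>2 * (\<omega>m - C * kb) = 4 * \<nu>\<^sup>2 * \<omega>m * kb\<^sup>2 + C * x0sq * kb"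
    using kbP' by (simp add: algebra_simps power2_eq_square power3_eq_cube)
  have Ckb_le: "C * kb \<le> \<omega>m"
  proof (cases "C = 0")
    case True thus ?thesis using wm_pos by simp
  next
    case False
    hence "C > 0" using C0 by simp
    moreover have "C\<^sup>2 * (\<omega>m - C * kb) \<ge> 0" unfolding Ckb using nu_pos wm_pos kb0 x0_nn C0 by simp
    ultimately have "\<omega>m - C * kb \<ge> 0" by (simp add: zero_le_mult_iff)
    thus ?thesis by simp
  qed
  show ?thesis
  proof (cases "km \<le> kb")
    case True
    define X0 where "X0 = Re (rr (-\<omega>m) (sg*kb))"
    have D0: "(-\<omega>m, sg*kb) \<in> Dinf \<omega>m km" using True wm_pos by (auto simp: Dinf_def sg_def abs_mult)
    have X0p: "X0 > 0" using X_pos[OF D0] by (simp add: X0_def)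
    have xi0: "(-\<omega>m + c * (sg*kb))\<^sup>2 = (\<omega>m - C * kb)\<^sup>2"
    proof -
      have h: "c * (sg*kb) = C * kb" by (metis mult.assoc sg_c C_def)
      have "(-\<omega>m + c * (sg*kb))\<^sup>2 = (-\<omega>m + C * kb)\<^sup>2" by (simp only: h)
      also have "\<dots> = (\<omega>m - C * kb)\<^sup>2" by (simp add: power2_eq_square algebra_simps)
      finally show ?thesis .
    qed
    have sq: "(sg*kb)\<^sup>2 = kb\<^sup>2" using sg_sq by (simp add: power_mult_distrib)
    have wp: "(X0\<^sup>2)\<^sup>2 - (x0sq + 4 * \<nu>\<^sup>2 * kb\<^sup>2) * X0\<^sup>2 - 4 * \<nu>\<^sup>2 * (\<omega>m - C * kb)\<^sup>2 = 0"
      using witness_poly[of "-\<omega>m" "sg*kb" X0] X0p xi0 sq by (simp add: X0_def)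
    have stat: "kb * (X0\<^sup>2 + C\<^sup>2) = C * \<omega>m"
    proof (cases "C = 0")
      case True thus ?thesis using kbz by simp
    next
      case False
      hence Cp: "C > 0" using C0 by simp
      have kbp: "kb > 0" using kbz kb0 False by simp
      define T where "T = C * (\<omega>m - C * kb) / kb"
      have up: "\<omega>m - C * kb > 0"
      proof -
        have "C\<^sup>2 * (\<omega>m - C * kb) > 0" unfolding Ckb using nu_pos wm_pos kbp x0_nn C0
          by (simp add: add_pos_nonneg)
        thus ?thesis using Cp by (simp add: zero_less_mult_iff)
      qed
      have Tp: "T > 0" using Cp up kbp by (simp add: T_def)
      have eT: "T\<^sup>2 - (x0sq + 4 * \<nu>\<^sup>2 * kb\<^sup>2) * T - 4 * \<nu>\<^sup>2 * (\<omega>m - C * kb)\<^sup>2 = 0"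
        unfolding T_def using T_identity[of kb C \<omega>m x0sq \<nu>] kbp kbP' by simp
      have "T \<le> X0\<^sup>2" by (rule root_le[OF _ wp _ _ ]) (use X0p Tp eT in auto)
      moreover have "X0\<^sup>2 \<le> T" by (rule root_le[OF Tp eT]) (use X0p wp in auto)
      ultimately have "X0\<^sup>2 = T" by simp
      thus ?thesis using kbp by (simp add: T_def field_simps power2_eq_square)
    qed
    have low: "\<And>\<omega> k. (\<omega>, k) \<in> Dinf \<omega>m km \<Longrightarrow> Re (rr \<omega> k) \<ge> X0"
      unfolding X0_def
    proof (rule case12(2)[of kb])
      show "km \<le> kb" by fact
      show "\<bar>c\<bar> * kb \<le> \<omega>m" using Ckb_le by (simp add: C_def)
      show "\<bar>c\<bar> * km \<le> \<omega>m" if "\<bar>c\<bar> > 0" using Ckb_le True C0 mult_left_mono[OF True C0] by (simp add: C_def)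
      fix K assume "K \<ge> km" "\<bar>c\<bar> * K \<le> \<omega>m"
      show "K\<^sup>2 + (\<omega>m - \<bar>c\<bar> * K)\<^sup>2 / (Re (rr (-\<omega>m) (sg*kb)))\<^sup>2 \<ge> kb\<^sup>2 + (\<omega>m - \<bar>c\<bar> * kb)\<^sup>2 / (Re (rr (-\<omega>m) (sg*kb)))\<^sup>2"
        using quad_stat[of "X0\<^sup>2" kb C \<omega>m K] X0p stat by (simp add: X0_def C_def)
    qed
    have Aeq: "Aconst \<nu> c x0sq \<omega>m km = phi \<nu> x0sq kb (- \<omega>m + C * kb)"
      using True by (simp add: Aconst_def Let_def kb_def C_def)
    also have "\<dots> = 4 * X0" unfolding X0_def
      by (rule phi_eq) (use sq xi0 in \<open>simp_all add: power2_eq_square algebra_simps\<close>)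
    finally have A4: "Aconst \<nu> c x0sq \<omega>m km = 4 * X0" .
    show ?thesis using D0 low A4 by (intro exI[of _ "-\<omega>m"] exI[of _ "sg*kb"]) (auto simp: X0_def)
  next
    case False
    note nkb = False
    show ?thesis
    proof (cases "c = 0 \<or> km \<le> \<omega>m / \<bar>c\<bar>")
      case True
      have Ckm: "C * km \<le> \<omega>m"
      proof (cases "C = 0")
        case True thus ?thesis using wm_pos by simp
      next
        case False
        hence "c \<noteq> 0" "C > 0" using C0 by (auto simp: C_def)
        hence "km \<le> \<omega>m / C" using \<open>c = 0 \<or> km \<le> \<omega>m / \<bar>c\<bar>\<close> by (simp add: C_def)
        thus ?thesis using \<open>C > 0\<close> by (simp add: field_simps)
      qed
      define X0 where "X0 = Re (rr (-\<omega>m) (sg*km))"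
      have D0: "(-\<omega>m, sg*km) \<in> Dinf \<omega>m km" using km_nn wm_pos by (auto simp: Dinf_def sg_def abs_mult)
      have X0p: "X0 > 0" using X_pos[OF D0] by (simp add: X0_def)
      have xi0: "(-\<omega>m + c * (sg*km))\<^sup>2 = (\<omega>m - C * km)\<^sup>2"
      proof -
        have h: "c * (sg*km) = C * km" by (metis mult.assoc sg_c C_def)
        have "(-\<omega>m + c * (sg*km))\<^sup>2 = (-\<omega>m + C * km)\<^sup>2" by (simp only: h)
        also have "\<dots> = (\<omega>m - C * km)\<^sup>2" by (simp add: power2_eq_square algebra_simps)
        finally show ?thesis .
      qed
      have sq: "(sg*km)\<^sup>2 = km\<^sup>2" using sg_sq by (simp add: power_mult_distrib)
      have wp: "(X0\<^sup>2)\<^sup>2 - (x0sq + 4 * \<nu>\<^sup>2 * km\<^sup>2) * X0\<^sup>2 - 4 * \<nu>\<^sup>2 * (\<omega>m - C * km)\<^sup>2 = 0"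
        using witness_poly[of "-\<omega>m" "sg*km" X0] X0p xi0 sq by (simp add: X0_def)
      have stat: "km * (X0\<^sup>2 + C\<^sup>2) \<ge> C * \<omega>m"
      proof (cases "C = 0")
        case True thus ?thesis using km_nn by simp
      next
        case False
        hence Cp: "C > 0" using C0 by simp
        have kmp: "km > 0" using nkb kb0 by simp
        define T where "T = C * (\<omega>m - C * km) / km"
        have u0: "\<omega>m - C * km \<ge> 0" using Ckm by simp
        have T0: "T \<ge> 0" using Cp u0 kmp by (simp add: T_def)
        have Pkm: "4 * \<nu>\<^sup>2 * \<omega>m * km\<^sup>2 + C * (C\<^sup>2 + x0sq) * km - C\<^sup>2 * \<omega>m \<ge> 0"
        proof -
          have "(4 * \<nu>\<^sup>2 * \<omega>m * km\<^sup>2 + C * (C\<^sup>2 + x0sq) * km - C\<^sup>2 * \<omega>m)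
             - (4 * \<nu>\<^sup>2 * \<omega>m * kb\<^sup>2 + C * (C\<^sup>2 + x0sq) * kb - C\<^sup>2 * \<omega>m)
             = (km - kb) * (4 * \<nu>\<^sup>2 * \<omega>m * (km + kb) + C * (C\<^sup>2 + x0sq))"
            by (simp add: algebra_simps power2_eq_square)
          moreover have "(km - kb) * (4 * \<nu>\<^sup>2 * \<omega>m * (km + kb) + C * (C\<^sup>2 + x0sq)) \<ge> 0"
            using nkb kb0 km_nn nu_pos wm_pos C0 x0_nn by (intro mult_nonneg_nonneg add_nonneg_nonneg) auto
          ultimately show ?thesis using kbP' by linarith
        qed
        have eT: "T\<^sup>2 - (x0sq + 4 * \<nu>\<^sup>2 * km\<^sup>2) * T - 4 * \<nu>\<^sup>2 * (\<omega>m - C * km)\<^sup>2 \<le> 0"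
        proof -
          have "T\<^sup>2 - (x0sq + 4 * \<nu>\<^sup>2 * km\<^sup>2) * T - 4 * \<nu>\<^sup>2 * (\<omega>m - C * km)\<^sup>2
              = - (\<omega>m - C*km) * (4 * \<nu>\<^sup>2 * \<omega>m * km\<^sup>2 + C * (C\<^sup>2 + x0sq) * km - C\<^sup>2 * \<omega>m) / km\<^sup>2"
            unfolding T_def using T_identity[of km C \<omega>m x0sq \<nu>] kmp by simp
          moreover have "(\<omega>m - C*km) * (4 * \<nu>\<^sup>2 * \<omega>m * km\<^sup>2 + C * (C\<^sup>2 + x0sq) * km - C\<^sup>2 * \<omega>m) / km\<^sup>2 \<ge> 0"
            using u0 Pkm by simp
          ultimately show ?thesis by linarith
        qed
        have "T \<le> X0\<^sup>2" by (rule root_le[OF _ wp _ T0 eT]) (use X0p in auto)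
        hence "km * (T + C\<^sup>2) \<le> km * (X0\<^sup>2 + C\<^sup>2)" using kmp by simp
        moreover have "km * (T + C\<^sup>2) = C * \<omega>m" using kmp by (simp add: T_def field_simps power2_eq_square)
        ultimately show ?thesis by simp
      qed
      have low: "\<And>\<omega> k. (\<omega>, k) \<in> Dinf \<omega>m km \<Longrightarrow> Re (rr \<omega> k) \<ge> X0"
        unfolding X0_def
      proof (rule case12(2)[of km])
        show "km \<le> km" by simp
        show "\<bar>c\<bar> * km \<le> \<omega>m" using Ckm by (simp add: C_def)
        thus "\<bar>c\<bar> * km \<le> \<omega>m" .
        fix K assume "K \<ge> km" "\<bar>c\<bar> * K \<le> \<omega>m"
        show "K\<^sup>2 + (\<omega>m - \<bar>c\<bar> * K)\<^sup>2 / (Re (rr (-\<omega>m) (sg*km)))\<^sup>2 \<ge> km\<^sup>2 + (\<omega>m - \<bar>c\<bar> * km)\<^sup>2 / (Re (rr (-\<omega>m) (sg*km)))\<^sup>2"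
          using quad_incr[of "X0\<^sup>2" C km \<omega>m K] X0p stat km_nn C0 \<open>K \<ge> km\<close> by (simp add: X0_def C_def)
      qed
      have Aeq: "Aconst \<nu> c x0sq \<omega>m km = phi \<nu> x0sq km (- \<omega>m + C * km)"
        using True nkb by (simp add: Aconst_def Let_def kb_def C_def)
      also have "\<dots> = 4 * X0" unfolding X0_def
        by (rule phi_eq) (use sq xi0 in \<open>simp_all add: power2_eq_square algebra_simps\<close>)
      finally have A4: "Aconst \<nu> c x0sq \<omega>m km = 4 * X0" .
      show ?thesis using D0 low A4 by (intro exI[of _ "-\<omega>m"] exI[of _ "sg*km"]) (auto simp: X0_def)
    next
      case False
      hence c0: "c \<noteq> 0" and kmg: "km > \<omega>m / C" by (auto simp: C_def)
      have Cp: "C > 0" using c0 by (simp add: C_def)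
      have Ckm: "C * km > \<omega>m" using kmg Cp by (simp add: field_simps)
      define X0 where "X0 = Re (rr (-C*km) (sg*km))"
      have h: "c * (sg*km) = C * km" by (metis mult.assoc sg_c C_def)
      have D0: "(-C*km, sg*km) \<in> Dinf \<omega>m km" using km_nn wm_pos Ckm Cp by (auto simp: Dinf_def sg_def abs_mult)
      have xi0: "-C*km + c * (sg*km) = 0" using h by simp
      have sq: "(sg*km)\<^sup>2 = km\<^sup>2" using sg_sq by (simp add: power_mult_distrib)
      have low: "\<And>\<omega> k. (\<omega>, k) \<in> Dinf \<omega>m km \<Longrightarrow> Re (rr \<omega> k) \<ge> X0"
        unfolding X0_def
      proof (rule lower_general[OF D0 refl])
        fix K \<xi> :: real assume "K \<ge> km"
        hence "K\<^sup>2 \<ge> km\<^sup>2" using km_nn by (intro power_mono) auto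
        moreover have "\<xi>\<^sup>2 / (Re (rr (- C * km) (sg * km)))\<^sup>2 \<ge> 0" by simp
        ultimately show "K\<^sup>2 + \<xi>\<^sup>2 / (Re (rr (- C * km) (sg * km)))\<^sup>2 \<ge> (sg * km)\<^sup>2 + (- C * km + c * (sg * km))\<^sup>2 / (Re (rr (- C * km) (sg * km)))\<^sup>2"
          unfolding xi0 sq by (intro add_increasing2) simp_all
      qed
      have Aeq: "Aconst \<nu> c x0sq \<omega>m km = phi \<nu> x0sq km 0"
        using False nkb by (simp add: Aconst_def Let_def kb_def C_def)
      also have "\<dots> = 4 * X0" unfolding X0_def
        by (rule phi_eq) (use sq xi0 in \<open>simp_all\<close>)
      finally have A4: "Aconst \<nu> c x0sq \<omega>m km = 4 * X0" .
      show ?thesis using D0 low A4 by (intro exI[of _ "-C*km"] exI[of _ "sg*km"]) (auto simp: X0_def)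
    qed
  qed
qed

end

lemma csqrt_cnj': assumes "Im z \<noteq> 0 \<or> Re z \<ge> 0" shows "csqrt (cnj z) = cnj (csqrt z)"
proof (rule complex_eqI)
  show "Re (csqrt (cnj z)) = Re (cnj (csqrt z))" by simp
  show "Im (csqrt (cnj z)) = Im (cnj (csqrt z))"
  proof (cases "Im z = 0")
    case True
    hence "cmod z = Re z" using assms by (simp add: cmod_def)
    thus ?thesis using True by simp
  next
    case False thus ?thesis by (simp add: sgn_if)
  qed
qed

context osw begin

abbreviation F where "F L q \<equiv> robin_sup \<nu> c x0sq \<omega>m km L q"
abbreviation nr where "nr L q \<omega> k \<equiv> cmod (rho \<nu> c x0sq \<omega> k q 0 L)"

lemma F_ge: "(\<omega>, k) \<in> Dinf \<omega>m km \<Longrightarrow> ereal (nr L q \<omega> k) \<le> F L q"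
  unfolding robin_sup_def by (rule SUP_upper2[of "(\<omega>,k)"]) auto

lemma F_le: "(\<And>\<omega> k. (\<omega>, k) \<in> Dinf \<omega>m km \<Longrightarrow> nr L q \<omega> k \<le> M) \<Longrightarrow> F L q \<le> ereal M"
  unfolding robin_sup_def by (rule SUP_least) auto

lemma D_neg: "(\<omega>, k) \<in> Dinf \<omega>m km \<Longrightarrow> (-\<omega>, -k) \<in> Dinf \<omega>m km"
  by (simp add: Dinf_def)

lemma rr_neg: "(\<omega>, k) \<in> Dinf \<omega>m km \<Longrightarrow> rr (-\<omega>) (-k) = cnj (rr \<omega> k)"
proof -
  assume w: "(\<omega>, k) \<in> Dinf \<omega>m km"
  have "sv (-\<omega>) (-k) = cnj (sv \<omega> k)" by (rule complex_eqI) (simp_all add: Re_sv Im_sv algebra_simps)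
  moreover have "Im (sv \<omega> k) \<noteq> 0 \<or> Re (sv \<omega> k) \<ge> 0" using x0_nn by (simp add: Re_sv)
  ultimately show ?thesis by (simp add: rr_def csqrt_cnj')
qed

lemma nr_cnj: "(\<omega>, k) \<in> Dinf \<omega>m km \<Longrightarrow> nr L (cnj q) \<omega> k = nr L q (-\<omega>) (-k)"
proof -
  assume w: "(\<omega>, k) \<in> Dinf \<omega>m km"
  have r: "rr \<omega> k = cnj (rr (-\<omega>) (-k))" using rr_neg[OF D_neg[OF w]] by simp
  have "cmod (cnj q - rr \<omega> k) = cmod (q - rr (-\<omega>) (-k))" unfolding r
    by (metis complex_cnj_diff complex_mod_cnj)
  moreover have "cmod (cnj q + rr \<omega> k) = cmod (q + rr (-\<omega>) (-k))" unfolding r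
    by (metis complex_cnj_add complex_mod_cnj)
  moreover have "Re (rr \<omega> k) = Re (rr (-\<omega>) (-k))" unfolding r by simp
  ultimately show ?thesis by (simp add: norm_rho)
qed

lemma F_cnj: "F L (cnj q) = F L q"
proof -
  have *: "F L (cnj q) \<le> F L q" for q
    unfolding robin_sup_def
  proof (rule SUP_least)
    fix wk assume "wk \<in> Dinf \<omega>m km"
    then obtain \<omega> k where wk: "wk = (\<omega>, k)" "(\<omega>, k) \<in> Dinf \<omega>m km" by (cases wk) auto
    have "ereal (nr L q (-\<omega>) (-k)) \<le> F L q" by (rule F_ge[OF D_neg[OF wk(2)]])
    thus "ereal (cmod (rho \<nu> c x0sq (fst wk) (snd wk) (cnj q) 0 L)) \<le> (SUP wk\<in>Dinf \<omega>m km. ereal (cmod (rho \<nu> c x0sq (fst wk) (snd wk) q 0 L)))"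
      using nr_cnj[OF wk(2)] wk(1) by (simp add: robin_sup_def)
  qed
  show ?thesis using *[of q] *[of "cnj q"] by simp
qed


lemma sv_shift: "sv (\<omega> + h) k = sv \<omega> k + \<i> * complex_of_real (4 * \<nu> * h)"
  by (rule complex_eqI) (simp_all add: Re_sv Im_sv algebra_simps)

lemma F_zero_denom:
  assumes L: "L > 0" and w: "(\<omega>, k) \<in> Dinf \<omega>m km" and q: "q + rr \<omega> k = 0"
  shows "F L q \<ge> ereal M"
proof -
  define r where "r = rr \<omega> k"
  define X where "X = Re r"
  have Xp: "X > 0" using X_pos[OF w] by (simp add: X_def r_def)
  define Bnd where "Bnd = sqrt (cmod (sv \<omega> k) + 4 * \<nu>)"
  define E where "E = exp (- (L / (2 * \<nu>)) * Bnd)"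
  have Ep: "E > 0" by (simp add: E_def)
  define \<epsilon> where "\<epsilon> = min 1 (X\<^sup>2 * E / (4 * \<nu> * (\<bar>M\<bar> + 1)))"
  have ep: "\<epsilon> > 0" using Xp Ep nu_pos by (simp add: \<epsilon>_def)
  have ep1: "\<epsilon> \<le> 1" by (simp add: \<epsilon>_def)
  have epM: "\<epsilon> * (4 * \<nu> * (\<bar>M\<bar> + 1)) \<le> X\<^sup>2 * E"
  proof -
    have "\<epsilon> \<le> X\<^sup>2 * E / (4 * \<nu> * (\<bar>M\<bar> + 1))" by (simp add: \<epsilon>_def)
    thus ?thesis using nu_pos by (simp add: field_simps add_pos_nonneg)
  qed
  have wm0: "\<omega> \<noteq> 0" using w wm_pos by (auto simp: Dinf_def)
  define h where "h = sgn \<omega> * \<epsilon>"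
  have hw: "\<bar>\<omega> + h\<bar> = \<bar>\<omega>\<bar> + \<epsilon>" using ep wm0 by (auto simp: h_def sgn_if)
  have w': "(\<omega> + h, k) \<in> Dinf \<omega>m km" using w hw ep by (auto simp: Dinf_def)
  have ah: "\<bar>h\<bar> = \<epsilon>" using ep wm0 by (simp add: h_def abs_mult)
  define r' where "r' = rr (\<omega> + h) k"
  define X' where "X' = Re r'"
  have X'0: "X' \<ge> 0" unfolding X'_def r'_def rr_def by (rule Re_csqrt)
  have sq: "r'\<^sup>2 - r\<^sup>2 = \<i> * complex_of_real (4 * \<nu> * h)"
    by (simp add: r'_def r_def rr_def sv_shift)
  have prod: "(r' - r) * (r' + r) = \<i> * complex_of_real (4 * \<nu> * h)"
    using sq by (simp add: algebra_simps power2_eq_square)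
  have nprod: "cmod (r' - r) * cmod (r' + r) = 4 * \<nu> * \<epsilon>"
  proof -
    have "cmod ((r' - r) * (r' + r)) = 4 * \<nu> * \<epsilon>" unfolding prod using nu_pos ah
      by (simp add: norm_mult abs_mult)
    thus ?thesis by (simp add: norm_mult)
  qed
  have a_ge: "cmod (r' + r) \<ge> X"
  proof -
    have "cmod (r' + r) \<ge> \<bar>Re (r' + r)\<bar>" by (rule abs_Re_le_cmod)
    moreover have "Re (r' + r) = X' + X" by (simp add: X'_def X_def)
    ultimately show ?thesis using X'0 Xp by simp
  qed
  have bpos: "cmod (r' - r) > 0"
  proof -
    have "cmod (r' - r) \<noteq> 0" using nprod nu_pos ep by auto
    thus ?thesis by simp
  qed
  have X'B: "X' \<le> Bnd"
  proof -
    have "X' \<le> cmod r'" unfolding X'_def by (rule complex_Re_le_cmod)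
    also have "cmod r' = sqrt (cmod (sv (\<omega> + h) k))" by (simp add: r'_def rr_def)
    also have "cmod (sv (\<omega> + h) k) \<le> cmod (sv \<omega> k) + 4 * \<nu> * \<epsilon>"
      unfolding sv_shift using norm_triangle_ineq[of "sv \<omega> k" "\<i> * complex_of_real (4 * \<nu> * h)"] nu_pos ah
      by (simp add: norm_mult abs_mult)
    also have "\<dots> \<le> cmod (sv \<omega> k) + 4 * \<nu>" using ep1 nu_pos by simp
    finally show ?thesis unfolding Bnd_def by (simp add: real_sqrt_le_iff)
  qed
  have expE: "exp (- (L / (2 * \<nu>)) * X') \<ge> E"
    unfolding E_def using X'B L nu_pos by (simp add: mult_left_mono divide_right_mono)
  have nr_eq: "nr L q (\<omega> + h) k = cmod (r' + r) / cmod (r' - r) * exp (- (L / (2 * \<nu>)) * X')"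
  proof -
    have "q = - r" using q by (simp add: r_def eq_neg_iff_add_eq_0)
    hence "q - r' = - (r' + r)" "q + r' = r' - r" by simp_all
    hence "cmod (q - r') = cmod (r' + r)" "cmod (q + r') = cmod (r' - r)" by (simp_all only: norm_minus_cancel)
    thus ?thesis by (simp add: norm_rho r'_def X'_def)
  qed
  have apos: "cmod (r' + r) > 0" using a_ge Xp by linarith
  have "cmod (r' + r) / cmod (r' - r) = (cmod (r' + r))\<^sup>2 / (cmod (r' - r) * cmod (r' + r))"
    using apos bpos by (simp add: power2_eq_square)
  also have "\<dots> = (cmod (r' + r))\<^sup>2 / (4 * \<nu> * \<epsilon>)" by (simp only: nprod)
  finally have "cmod (r' + r) / cmod (r' - r) = (cmod (r' + r))\<^sup>2 / (4 * \<nu> * \<epsilon>)" .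
  also have "\<dots> \<ge> X\<^sup>2 / (4 * \<nu> * \<epsilon>)" using a_ge Xp nu_pos ep
    by (intro divide_right_mono power_mono) auto
  finally have "cmod (r' + r) / cmod (r' - r) * exp (- (L / (2 * \<nu>)) * X') \<ge> X\<^sup>2 / (4 * \<nu> * \<epsilon>) * E"
    using expE Ep by (intro mult_mono) auto
  moreover have "X\<^sup>2 / (4 * \<nu> * \<epsilon>) * E \<ge> \<bar>M\<bar> + 1"
    using epM nu_pos ep by (simp add: field_simps)
  ultimately have "nr L q (\<omega> + h) k \<ge> M" unfolding nr_eq by linarith
  hence "ereal M \<le> ereal (nr L q (\<omega> + h) k)" by simp
  also have "\<dots> \<le> F L q" by (rule F_ge[OF w'])
  finally show ?thesis .
qed

end

lemma f_bound:
  fixes a y :: real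
  assumes a: "a \<ge> 0" and y: "y \<ge> a / 4" "y > 0"
  shows "4 * y / (1 + 2*y + 2*y\<^sup>2) + a\<^sup>2 * y / 8 \<ge> a - a\<^sup>2"
proof (cases "y \<le> 1")
  case True
  have "4 * y / (1 + 4*y) \<le> 4 * y / (1 + 2*y + 2*y\<^sup>2)"
  proof (rule divide_left_mono)
    have "y * y \<le> y * 1" using True y by (intro mult_left_mono) auto
    thus "1 + 2*y + 2*y\<^sup>2 \<le> 1 + 4*y" by (simp add: power2_eq_square)
    show "0 \<le> 4 * y" using y by simp
    show "0 < (1 + 4*y) * (1 + 2*y + 2*y\<^sup>2)" using y by (intro mult_pos_pos) (auto simp: add_pos_nonneg)
  qed
  moreover have "a / (1 + a) \<le> 4 * y / (1 + 4*y)"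
  proof -
    have "a * (1 + 4*y) \<le> 4 * y * (1 + a)" using y a by (simp add: algebra_simps)
    thus ?thesis using a y by (simp add: divide_simps)
  qed
  moreover have "a - a\<^sup>2 \<le> a / (1 + a)"
  proof -
    have "(a - a\<^sup>2) * (1 + a) \<le> a" using a by (simp add: algebra_simps power2_eq_square power3_eq_cube)
    thus ?thesis using a by (simp add: divide_simps)
  qed
  moreover have "a\<^sup>2 * y / 8 \<ge> 0" using y by simp
  ultimately show ?thesis by linarith
next
  case False
  define z where "z = 2*y + 3"
  have zp: "z > 0" using y by (simp add: z_def)
  have "4 / z \<le> 4 * y / (1 + 2*y + 2*y\<^sup>2)"
  proof -
    have "4 * (1 + 2*y + 2*y\<^sup>2) \<le> 4 * y * z" using False by (simp add: z_def algebra_simps power2_eq_square)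
    thus ?thesis using zp y by (simp add: divide_simps add_pos_pos)
  qed
  moreover have "4 / z + a\<^sup>2 * (z - 3) / 16 \<ge> a - 3 * a\<^sup>2 / 16"
  proof -
    have "4 / z + a\<^sup>2 * z / 16 - a = (a * z - 8)\<^sup>2 / (16 * z)" using zp
      by (simp add: field_simps power2_eq_square)
    hence "4 / z + a\<^sup>2 * z / 16 - a \<ge> 0" using zp by simp
    moreover have "a\<^sup>2 * (z - 3) / 16 = a\<^sup>2 * z / 16 - 3 * a\<^sup>2 / 16" by (simp add: field_simps)
    ultimately show ?thesis by linarith
  qed
  moreover have "a\<^sup>2 * y / 8 = a\<^sup>2 * (z - 3) / 16" by (simp add: z_def)
  moreover have "a - 3 * a\<^sup>2 / 16 \<ge> a - a\<^sup>2" using a by simp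
  ultimately show ?thesis by linarith
qed


context osw begin

lemma nr_real_sq:
  fixes \<omega> k p L :: real
  defines "X \<equiv> Re (rr \<omega> k)" and "Y \<equiv> Im (rr \<omega> k)"
  assumes dp: "(p + X)\<^sup>2 + Y\<^sup>2 > 0"
  shows "(nr L (complex_of_real p) \<omega> k)\<^sup>2 = (1 - 4*p*X / ((p + X)\<^sup>2 + Y\<^sup>2)) * exp (- (L * X / \<nu>))"
proof -
  have n1: "(cmod (complex_of_real p - rr \<omega> k))\<^sup>2 = (p - X)\<^sup>2 + Y\<^sup>2"
    by (simp add: cmod_power2 X_def Y_def)
  have n2: "(cmod (complex_of_real p + rr \<omega> k))\<^sup>2 = (p + X)\<^sup>2 + Y\<^sup>2"
    by (simp add: cmod_power2 X_def Y_def)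
  have e: "(exp (- (L / (2 * \<nu>)) * X))\<^sup>2 = exp (- (L * X / \<nu>))"
    using nu_pos by (simp add: power2_eq_square exp_add[symmetric] field_simps)
  have "(nr L (complex_of_real p) \<omega> k)\<^sup>2 = (cmod (complex_of_real p - rr \<omega> k))\<^sup>2 / (cmod (complex_of_real p + rr \<omega> k))\<^sup>2 * (exp (- (L / (2 * \<nu>)) * X))\<^sup>2"
    by (simp add: norm_rho X_def power_mult_distrib power_divide)
  also have "\<dots> = ((p - X)\<^sup>2 + Y\<^sup>2) / ((p + X)\<^sup>2 + Y\<^sup>2) * exp (- (L * X / \<nu>))" by (simp only: n1 n2 e)
  also have "((p - X)\<^sup>2 + Y\<^sup>2) / ((p + X)\<^sup>2 + Y\<^sup>2) = 1 - 4*p*X / ((p + X)\<^sup>2 + Y\<^sup>2)"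
    using dp by (simp add: field_simps power2_eq_square)
  finally show ?thesis .
qed

lemma nr_nonneg: "nr L q \<omega> k \<ge> 0" by simp

lemma nr_upper:
  fixes \<omega> k p L :: real
  assumes w: "(\<omega>, k) \<in> Dinf \<omega>m km" and p: "p > 0"
  defines "X \<equiv> Re (rr \<omega> k)"
  shows "(nr L (complex_of_real p) \<omega> k)\<^sup>2 \<le> (1 - 4*p*X / ((p + X)\<^sup>2 + X\<^sup>2)) * exp (- (L * X / \<nu>))"
proof -
  define Y where "Y = Im (rr \<omega> k)"
  have Xp: "X > 0" using X_pos[OF w] by (simp add: X_def)
  have YX: "Y\<^sup>2 \<le> X\<^sup>2" using Y_le_X by (simp add: X_def Y_def)
  have dp: "(p + X)\<^sup>2 + Y\<^sup>2 > 0" using p Xp by (simp add: add_pos_nonneg)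
  have "4*p*X / ((p + X)\<^sup>2 + X\<^sup>2) \<le> 4*p*X / ((p + X)\<^sup>2 + Y\<^sup>2)"
    using YX dp p Xp by (intro divide_left_mono) (auto intro!: mult_pos_pos)
  hence "1 - 4*p*X / ((p + X)\<^sup>2 + Y\<^sup>2) \<le> 1 - 4*p*X / ((p + X)\<^sup>2 + X\<^sup>2)" by simp
  thus ?thesis using nr_real_sq[where \<omega>=\<omega> and k=k and p=p and L=L] dp unfolding X_def Y_def
    by (simp add: mult_right_mono)
qed

lemma nr_lower_low:
  fixes \<omega> k p L :: real
  assumes w: "(\<omega>, k) \<in> Dinf \<omega>m km" and p: "p > 0"
  defines "X \<equiv> Re (rr \<omega> k)"
  shows "(nr L (complex_of_real p) \<omega> k)\<^sup>2 \<ge> (1 - 4*X/p) * exp (- (L * X / \<nu>))"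
proof -
  define Y where "Y = Im (rr \<omega> k)"
  have Xp: "X > 0" using X_pos[OF w] by (simp add: X_def)
  have dp: "(p + X)\<^sup>2 + Y\<^sup>2 > 0" using p Xp by (simp add: add_pos_nonneg)
  have "p\<^sup>2 \<le> (p + X)\<^sup>2 + Y\<^sup>2" using p Xp by (simp add: power2_eq_square algebra_simps add_nonneg_nonneg)
  hence "4*p*X / ((p + X)\<^sup>2 + Y\<^sup>2) \<le> 4*p*X / p\<^sup>2"
    using p Xp dp by (intro divide_left_mono) (auto intro!: mult_pos_pos)
  also have "4*p*X / p\<^sup>2 = 4*X/p" using p by (simp add: power2_eq_square)
  finally have "1 - 4*X/p \<le> 1 - 4*p*X / ((p + X)\<^sup>2 + Y\<^sup>2)" by simp
  thus ?thesis using nr_real_sq[where \<omega>=\<omega> and k=k and p=p and L=L] dp unfolding X_def Y_def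
    by (simp add: mult_right_mono)
qed

lemma nr_le_1:
  assumes w: "(\<omega>, k) \<in> Dinf \<omega>m km" and p: "p \<ge> 0" and L: "L \<ge> 0"
  shows "nr L (complex_of_real p) \<omega> k \<le> 1"
proof -
  have Xp: "Re (rr \<omega> k) > 0" using X_pos[OF w] by simp
  have dp: "(p + Re (rr \<omega> k))\<^sup>2 + (Im (rr \<omega> k))\<^sup>2 > 0" using p Xp by (simp add: add_pos_nonneg)
  have t0: "4*p*Re (rr \<omega> k) / ((p + Re (rr \<omega> k))\<^sup>2 + (Im (rr \<omega> k))\<^sup>2) \<ge> 0" using p Xp dp by simp
  have e1: "exp (- (L * Re (rr \<omega> k) / \<nu>)) \<le> 1" using L Xp nu_pos by simp
  have "(1 - 4*p*Re (rr \<omega> k) / ((p + Re (rr \<omega> k))\<^sup>2 + (Im (rr \<omega> k))\<^sup>2)) * exp (- (L * Re (rr \<omega> k) / \<nu>)) \<le> 1 * exp (- (L * Re (rr \<omega> k) / \<nu>))"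
    using t0 by (intro mult_right_mono) auto
  hence "(nr L (complex_of_real p) \<omega> k)\<^sup>2 \<le> 1" using e1 nr_real_sq[where \<omega>=\<omega> and k=k and p=p and L=L, OF dp] by linarith
  hence "(nr L (complex_of_real p) \<omega> k)\<^sup>2 \<le> 1\<^sup>2" by (simp only: power_one)
  thus ?thesis by (rule power2_le_imp_le) simp
qed

lemma high_witness:
  assumes X1: "X1 > 0" "X1\<^sup>2 \<ge> 2 * (x0sq + 4 * \<nu>\<^sup>2 * km\<^sup>2)" "X1\<^sup>2 \<ge> 4 * \<nu> * (\<omega>m + \<bar>c\<bar> * km)"
  shows "\<exists>\<omega>. (\<omega>, km) \<in> Dinf \<omega>m km \<and> Re (rr \<omega> km) = X1 \<and> (Im (rr \<omega> km))\<^sup>2 = X1\<^sup>2 - (x0sq + 4 * \<nu>\<^sup>2 * km\<^sup>2)"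
proof -
  define a1 where "a1 = x0sq + 4 * \<nu>\<^sup>2 * km\<^sup>2"
  have a1: "a1 \<ge> 0" using x0_nn by (simp add: a1_def)
  define Y1 where "Y1 = sqrt (X1\<^sup>2 - a1)"
  have "2 * a1 \<le> X1\<^sup>2" using X1(2) by (simp add: a1_def)
  hence XA: "X1\<^sup>2 - a1 \<ge> 0" using a1 by linarith
  hence Y1sq: "Y1\<^sup>2 = X1\<^sup>2 - a1" unfolding Y1_def by (rule real_sqrt_pow2)
  have Y10: "Y1 \<ge> 0" using XA by (simp add: Y1_def)
  define \<omega> where "\<omega> = X1 * Y1 / (2 * \<nu>) - c * km"
  have sv_eq: "sv \<omega> km = (Complex X1 Y1)\<^sup>2"
    by (rule complex_eqI) (use Y1sq nu_pos in \<open>simp_all add: Re_sv Im_sv \<omega>_def a1_def power2_eq_square field_simps\<close>)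
  have r_eq: "rr \<omega> km = Complex X1 Y1" unfolding rr_def sv_eq using X1 by (intro csqrt_square) simp
  define m where "m = 2 * \<nu> * (\<omega>m + \<bar>c\<bar> * km)"
  have m0: "m \<ge> 0" using nu_pos wm_pos km_nn by (simp add: m_def)
  have "(X1 * Y1)\<^sup>2 = X1\<^sup>2 * (X1\<^sup>2 - a1)" by (simp add: power_mult_distrib Y1sq)
  also have "\<dots> \<ge> X1\<^sup>2 * (X1\<^sup>2 / 2)" using X1(2) by (intro mult_left_mono) (auto simp: a1_def)
  also have "X1\<^sup>2 * (X1\<^sup>2 / 2) \<ge> (2*m) * (2*m) / 2"
  proof -
    have h2m: "2*m \<le> X1\<^sup>2" using X1(3) by (simp add: m_def)
    have "(2*m) * (2*m) \<le> X1\<^sup>2 * X1\<^sup>2" using h2m m0 by (intro mult_mono) auto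
    thus ?thesis by simp
  qed
  finally have h: "(X1 * Y1)\<^sup>2 \<ge> 2*m * (2*m) / 2" .
  have "(X1 * Y1)\<^sup>2 \<ge> m\<^sup>2" using h mult_nonneg_nonneg[OF m0 m0] unfolding power2_eq_square by linarith
  hence XYm: "X1 * Y1 \<ge> m" by (rule power2_le_imp_le) (use X1 Y10 in simp)
  have "\<omega> \<ge> \<omega>m"
  proof -
    have "X1 * Y1 / (2 * \<nu>) \<ge> \<omega>m + \<bar>c\<bar> * km" using XYm nu_pos by (simp add: m_def field_simps)
    moreover have "c * km \<le> \<bar>c\<bar> * km" using km_nn by (simp add: mult_right_mono)
    ultimately show ?thesis by (simp add: \<omega>_def)
  qed
  hence "(\<omega>, km) \<in> Dinf \<omega>m km" using km_nn by (simp add: Dinf_def)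
  thus ?thesis using r_eq Y1sq by (intro exI[of _ \<omega>]) (simp add: a1_def)
qed

end

lemma parallelogram_c:
  fixes a b r :: complex
  shows "(cmod ((a + b)/2 - r))\<^sup>2 = ((cmod (a - r))\<^sup>2 + (cmod (b - r))\<^sup>2)/2 - (cmod (a - b))\<^sup>2 / 4"
  unfolding cmod_power2 by (simp add: power2_eq_square field_simps)

lemma parallelogram_c':
  fixes a b r :: complex
  shows "(cmod ((a + b)/2 + r))\<^sup>2 = ((cmod (a + r))\<^sup>2 + (cmod (b + r))\<^sup>2)/2 - (cmod (a - b))\<^sup>2 / 4"
  using parallelogram_c[of a b "-r"] by simp

lemma cont_H:
  fixes m d2 \<delta> L \<nu> X0 xb :: real
  assumes D: "\<And>x. x \<in> {X0..xb} \<Longrightarrow> (m + x)\<^sup>2 + x\<^sup>2 > 0" and nu: "\<nu> \<noteq> 0"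
  shows "continuous_on {X0..xb} (\<lambda>x. min (\<delta>\<^sup>2 - max (exp (- (L * x / \<nu>)) - \<delta>\<^sup>2) 0 * d2 / (4 * ((m + x)\<^sup>2 + x\<^sup>2)))
         (exp (- (L * x / \<nu>)) * (1 - 4*m*x / ((m + x)\<^sup>2 + x\<^sup>2))))"
proof -
  have D4: "\<forall>x\<in>{X0..xb}. 4 * ((m + x)\<^sup>2 + x\<^sup>2) \<noteq> 0" "\<forall>x\<in>{X0..xb}. (m + x)\<^sup>2 + x\<^sup>2 \<noteq> 0"
    using D by (metis less_irrefl mult_eq_0_iff zero_neq_numeral)+
  show ?thesis
    by (intro continuous_on_min continuous_on_max continuous_on_diff continuous_on_mult continuous_on_divide
        continuous_on_exp continuous_on_minus continuous_on_const continuous_on_id continuous_on_power continuous_on_add)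
       (use D4 nu in auto)
qed

lemma sup_gap:
  fixes H :: "real \<Rightarrow> real"
  assumes cont: "continuous_on {x0..xb} H" and x: "x0 \<le> xb" and lt: "\<And>x. x \<ge> x0 \<Longrightarrow> H x < cc"
    and tail: "\<And>x. x \<ge> xb \<Longrightarrow> H x \<le> cc/2" and c: "cc > 0"
  shows "\<exists>M. M < cc \<and> M \<ge> 0 \<and> (\<forall>x\<ge>x0. H x \<le> M)"
proof -
  obtain xs where xs: "xs \<in> {x0..xb}" "\<And>y. y \<in> {x0..xb} \<Longrightarrow> H y \<le> H xs"
    using continuous_attains_sup[OF compact_Icc _ cont] x by auto
  define M where "M = max (H xs) (cc/2)"
  have "H xs < cc" using lt xs(1) by simp
  hence "M < cc" using c by (simp add: M_def)
  moreover have "M \<ge> 0" using c by (simp add: M_def)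
  moreover have "\<forall>x\<ge>x0. H x \<le> M"
  proof (intro allI impI)
    fix x assume "x \<ge> x0"
    show "H x \<le> M"
    proof (cases "x \<le> xb")
      case True thus ?thesis using xs(2)[of x] \<open>x \<ge> x0\<close> by (simp add: M_def)
    next
      case False thus ?thesis using tail[of x] by (simp add: M_def)
    qed
  qed
  ultimately show ?thesis by blast
qed

context osw begin

lemma sq_bound_from_F:
  assumes L: "L > 0" and w: "(\<omega>, k) \<in> Dinf \<omega>m km" and q: "Re q > 0" and F: "F L q \<le> ereal \<delta>"
  shows "exp (- (L * Re (rr \<omega> k) / \<nu>)) * (cmod (q - rr \<omega> k))\<^sup>2 \<le> \<delta>\<^sup>2 * (cmod (q + rr \<omega> k))\<^sup>2"
proof -
  define r where "r = rr \<omega> k"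
  define X where "X = Re r"
  have Xp: "X > 0" using X_pos[OF w] by (simp add: X_def r_def)
  have pos: "cmod (q + r) > 0"
  proof -
    have "Re (q + r) > 0" using q Xp by (simp add: X_def)
    moreover have "\<bar>Re (q + r)\<bar> \<le> cmod (q + r)" by (rule abs_Re_le_cmod)
    ultimately show ?thesis by linarith
  qed
  have "ereal (nr L q \<omega> k) \<le> ereal \<delta>" using F_ge[OF w, where L=L and q=q] F by (rule order_trans)
  hence n: "nr L q \<omega> k \<le> \<delta>" by simp
  have nr_eq: "nr L q \<omega> k = cmod (q - r) / cmod (q + r) * exp (- (L / (2 * \<nu>)) * X)"
    by (simp add: norm_rho r_def X_def)
  have "cmod (q - r) * exp (- (L / (2 * \<nu>)) * X) \<le> \<delta> * cmod (q + r)"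
    using n pos unfolding nr_eq by (simp add: field_simps)
  moreover have "cmod (q - r) * exp (- (L / (2 * \<nu>)) * X) \<ge> 0" by simp
  ultimately have "(cmod (q - r) * exp (- (L / (2 * \<nu>)) * X))\<^sup>2 \<le> (\<delta> * cmod (q + r))\<^sup>2"
    by (intro power_mono) auto
  moreover have "(exp (- (L / (2 * \<nu>)) * X))\<^sup>2 = exp (- (L * X / \<nu>))"
    using nu_pos by (simp add: power2_eq_square exp_add[symmetric] field_simps)
  ultimately show ?thesis by (simp add: power_mult_distrib X_def r_def mult.commute)
qed


lemma nr_sq_eq:
  "(nr L q \<omega> k)\<^sup>2 * (cmod (q + rr \<omega> k))\<^sup>2 = exp (- (L * Re (rr \<omega> k) / \<nu>)) * (cmod (q - rr \<omega> k))\<^sup>2"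
  if "cmod (q + rr \<omega> k) > 0"
proof -
  have e: "(exp (- (L / (2 * \<nu>)) * Re (rr \<omega> k)))\<^sup>2 = exp (- (L * Re (rr \<omega> k) / \<nu>))"
    using nu_pos by (simp add: power2_eq_square exp_add[symmetric] field_simps)
  have "(nr L q \<omega> k)\<^sup>2 = (cmod (q - rr \<omega> k))\<^sup>2 / (cmod (q + rr \<omega> k))\<^sup>2 * (exp (- (L / (2 * \<nu>)) * Re (rr \<omega> k)))\<^sup>2"
    by (simp add: norm_rho power_mult_distrib power_divide)
  thus ?thesis using that unfolding e by (simp add: field_simps)
qed

lemma nr_mid_bound:
  assumes L: "L > 0" and w: "(\<omega>, k) \<in> Dinf \<omega>m km" and q1: "Re q1 > 0" and q2: "Re q2 > 0"
    and F1: "F L q1 \<le> ereal \<delta>" and F2: "F L q2 \<le> ereal \<delta>" and mid: "(q1 + q2) / 2 = complex_of_real m" and m: "m > 0"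
  shows "(nr L (complex_of_real m) \<omega> k)\<^sup>2 \<le>
     min (\<delta>\<^sup>2 - max (exp (- (L * Re (rr \<omega> k) / \<nu>)) - \<delta>\<^sup>2) 0 * (cmod (q1 - q2))\<^sup>2 / (4 * ((m + Re (rr \<omega> k))\<^sup>2 + (Re (rr \<omega> k))\<^sup>2)))
         (exp (- (L * Re (rr \<omega> k) / \<nu>)) * (1 - 4*m*Re (rr \<omega> k) / ((m + Re (rr \<omega> k))\<^sup>2 + (Re (rr \<omega> k))\<^sup>2)))"
proof -
  define r where "r = rr \<omega> k"
  define X where "X = Re r"
  define Y where "Y = Im r"
  define e where "e = exp (- (L * X / \<nu>))"
  define D2 where "D2 = (m + X)\<^sup>2 + X\<^sup>2"
  define d2 where "d2 = (cmod (q1 - q2))\<^sup>2"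
  have Xp: "X > 0" using X_pos[OF w] by (simp add: X_def r_def)
  have YX: "Y\<^sup>2 \<le> X\<^sup>2" using Y_le_X by (simp add: X_def Y_def r_def)
  have D2p: "D2 > 0" using Xp m by (simp add: D2_def add_pos_nonneg)
  have ep: "e > 0" by (simp add: e_def)
  have B2: "(nr L (complex_of_real m) \<omega> k)\<^sup>2 \<le> e * (1 - 4*m*X / D2)"
    using nr_upper[OF w m, where L=L] by (simp add: e_def D2_def X_def r_def mult.commute)
  have t0: "4*m*X / D2 \<ge> 0" using m Xp D2p by simp
  have B2e: "e * (1 - 4*m*X / D2) \<le> e" using ep t0 by (simp add: mult_left_le)
  have B1: "(nr L (complex_of_real m) \<omega> k)\<^sup>2 \<le> \<delta>\<^sup>2 - max (e - \<delta>\<^sup>2) 0 * d2 / (4 * D2)"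
  proof (cases "e \<le> \<delta>\<^sup>2")
    case True thus ?thesis using B2 B2e by simp
  next
    case False
    hence emax: "max (e - \<delta>\<^sup>2) 0 = e - \<delta>\<^sup>2" by simp
    define P where "P = (cmod (complex_of_real m + r))\<^sup>2"
    have P_eq: "P = (m + X)\<^sup>2 + Y\<^sup>2" by (simp add: P_def cmod_power2 X_def Y_def)
    have Pp: "P > 0" using P_eq Xp m by (simp add: add_pos_nonneg)
    have PD: "P \<le> D2" using P_eq YX by (simp add: D2_def)
    have s1: "e * (cmod (q1 - r))\<^sup>2 \<le> \<delta>\<^sup>2 * (cmod (q1 + r))\<^sup>2"
      using sq_bound_from_F[OF L w q1 F1] by (simp add: e_def X_def r_def)
    have s2: "e * (cmod (q2 - r))\<^sup>2 \<le> \<delta>\<^sup>2 * (cmod (q2 + r))\<^sup>2"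
      using sq_bound_from_F[OF L w q2 F2] by (simp add: e_def X_def r_def)
    have pm: "(cmod (complex_of_real m - r))\<^sup>2 = ((cmod (q1 - r))\<^sup>2 + (cmod (q2 - r))\<^sup>2)/2 - d2 / 4"
      using parallelogram_c[of q1 q2 r] mid by (simp add: d2_def)
    have pp: "P = ((cmod (q1 + r))\<^sup>2 + (cmod (q2 + r))\<^sup>2)/2 - d2 / 4"
      using parallelogram_c'[of q1 q2 r] mid by (simp add: d2_def P_def)
    have key: "e * (cmod (complex_of_real m - r))\<^sup>2 \<le> \<delta>\<^sup>2 * P - (e - \<delta>\<^sup>2) * d2 / 4"
    proof -
      have "e * (cmod (complex_of_real m - r))\<^sup>2 = (e * (cmod (q1 - r))\<^sup>2 + e * (cmod (q2 - r))\<^sup>2)/2 - e * d2 / 4"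
        unfolding pm by (simp add: algebra_simps)
      also have "\<dots> \<le> (\<delta>\<^sup>2 * (cmod (q1 + r))\<^sup>2 + \<delta>\<^sup>2 * (cmod (q2 + r))\<^sup>2)/2 - e * d2 / 4"
        using s1 s2 by simp
      also have "\<dots> = \<delta>\<^sup>2 * P - (e - \<delta>\<^sup>2) * d2 / 4" unfolding pp by (simp add: field_simps)
      finally show ?thesis .
    qed
    have cm: "cmod (complex_of_real m + r) > 0" using Pp by (simp add: P_def)
    have ne: "(nr L (complex_of_real m) \<omega> k)\<^sup>2 * P = e * (cmod (complex_of_real m - r))\<^sup>2"
      using nr_sq_eq[of "complex_of_real m" \<omega> k L] cm by (simp add: P_def e_def X_def r_def)
    have "(nr L (complex_of_real m) \<omega> k)\<^sup>2 * P \<le> \<delta>\<^sup>2 * P - (e - \<delta>\<^sup>2) * d2 / 4" using ne key by simp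
    hence n1: "(nr L (complex_of_real m) \<omega> k)\<^sup>2 \<le> \<delta>\<^sup>2 - (e - \<delta>\<^sup>2) * d2 / (4 * P)"
      using Pp by (simp add: field_simps)
    have "(e - \<delta>\<^sup>2) * d2 / (4 * D2) \<le> (e - \<delta>\<^sup>2) * d2 / (4 * P)"
      using False Pp PD by (intro divide_left_mono mult_nonneg_nonneg) (auto simp: d2_def)
    thus ?thesis using n1 emax by simp
  qed
  show ?thesis using B1 B2 by (simp add: e_def D2_def d2_def X_def r_def)
qed


lemma mid_strict:
  assumes L: "L > 0" and ne: "q1 \<noteq> q2" and q1: "Re q1 > 0" and q2: "Re q2 > 0"
    and F1: "F L q1 \<le> ereal \<delta>" and F2: "F L q2 \<le> ereal \<delta>" and mid: "(q1 + q2) / 2 = complex_of_real m"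
    and m: "m > 0" and d: "\<delta> > 0"
  shows "F L (complex_of_real m) < ereal \<delta>"
proof -
  obtain \<omega>0 k0 where A: "(\<omega>0, k0) \<in> Dinf \<omega>m km" "4 * Re (rr \<omega>0 k0) = Aconst \<nu> c x0sq \<omega>m km"
      "\<And>\<omega> k. (\<omega>, k) \<in> Dinf \<omega>m km \<Longrightarrow> 4 * Re (rr \<omega> k) \<ge> Aconst \<nu> c x0sq \<omega>m km"
    using A_char by blast
  define X0 where "X0 = Re (rr \<omega>0 k0)"
  have X0p: "X0 > 0" using X_pos[OF A(1)] by (simp add: X0_def)
  have Xge: "Re (rr \<omega> k) \<ge> X0" if "(\<omega>, k) \<in> Dinf \<omega>m km" for \<omega> k
    using A(2) A(3)[OF that] by (simp add: X0_def)
  define d2 where "d2 = (cmod (q1 - q2))\<^sup>2"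
  have d2p: "d2 > 0" using ne by (simp add: d2_def)
  define H where "H = (\<lambda>x. min (\<delta>\<^sup>2 - max (exp (- (L * x / \<nu>)) - \<delta>\<^sup>2) 0 * d2 / (4 * ((m + x)\<^sup>2 + x\<^sup>2)))
         (exp (- (L * x / \<nu>)) * (1 - 4*m*x / ((m + x)\<^sup>2 + x\<^sup>2))))"
  have Hlt: "H x < \<delta>\<^sup>2" if x: "x \<ge> X0" for x
  proof -
    have xp: "x > 0" using x X0p by simp
    have Dp: "(m + x)\<^sup>2 + x\<^sup>2 > 0" using xp m by (simp add: add_pos_nonneg)
    show ?thesis
    proof (cases "exp (- (L * x / \<nu>)) > \<delta>\<^sup>2")
      case True
      hence "max (exp (- (L * x / \<nu>)) - \<delta>\<^sup>2) 0 * d2 / (4 * ((m + x)\<^sup>2 + x\<^sup>2)) > 0"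
        using d2p Dp by simp
      thus ?thesis by (simp add: H_def)
    next
      case False
      have "4*m*x / ((m + x)\<^sup>2 + x\<^sup>2) > 0" using m xp Dp by simp
      hence lt: "exp (- (L * x / \<nu>)) * (1 - 4*m*x / ((m + x)\<^sup>2 + x\<^sup>2)) < exp (- (L * x / \<nu>))" by simp
      have "H x \<le> exp (- (L * x / \<nu>)) * (1 - 4*m*x / ((m + x)\<^sup>2 + x\<^sup>2))" by (simp add: H_def)
      thus ?thesis using lt False by linarith
    qed
  qed
  define xb where "xb = max X0 (\<nu> * ln (2 / \<delta>\<^sup>2) / L)"
  have tail: "H x \<le> \<delta>\<^sup>2 / 2" if x: "x \<ge> xb" for x
  proof -
    have xp: "x > 0" using x X0p by (simp add: xb_def)
    have Dp: "(m + x)\<^sup>2 + x\<^sup>2 > 0" using xp m by (simp add: add_pos_nonneg)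
    have "x \<ge> \<nu> * ln (2 / \<delta>\<^sup>2) / L" using x by (simp add: xb_def)
    hence "L * x / \<nu> \<ge> ln (2 / \<delta>\<^sup>2)" using L nu_pos by (simp add: field_simps)
    hence "exp (- (L * x / \<nu>)) \<le> exp (- ln (2 / \<delta>\<^sup>2))" by simp
    also have "\<dots> = \<delta>\<^sup>2 / 2" using d by (simp add: exp_minus exp_ln)
    finally have e: "exp (- (L * x / \<nu>)) \<le> \<delta>\<^sup>2 / 2" .
    have "4*m*x / ((m + x)\<^sup>2 + x\<^sup>2) \<ge> 0" using m xp Dp by simp
    hence le: "exp (- (L * x / \<nu>)) * (1 - 4*m*x / ((m + x)\<^sup>2 + x\<^sup>2)) \<le> exp (- (L * x / \<nu>))" by (simp add: mult_left_le)
    have "H x \<le> exp (- (L * x / \<nu>)) * (1 - 4*m*x / ((m + x)\<^sup>2 + x\<^sup>2))" by (simp add: H_def)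
    thus ?thesis using le e by linarith
  qed
  have cont: "continuous_on {X0..xb} H"
  proof -
    have "\<And>x. x \<in> {X0..xb} \<Longrightarrow> (m + x)\<^sup>2 + x\<^sup>2 > 0" using X0p m by (auto simp: add_pos_nonneg)
    moreover have nz: "\<nu> \<noteq> 0" using nu_pos by simp
    ultimately show ?thesis unfolding H_def by (rule cont_H)
  qed
  obtain M where M: "M < \<delta>\<^sup>2" "M \<ge> 0" "\<And>x. x \<ge> X0 \<Longrightarrow> H x \<le> M"
    using sup_gap[OF cont _ Hlt tail] d by (auto simp: xb_def)
  have "F L (complex_of_real m) \<le> ereal (sqrt M)"
  proof (rule F_le)
    fix \<omega> k assume w: "(\<omega>, k) \<in> Dinf \<omega>m km"
    have "(nr L (complex_of_real m) \<omega> k)\<^sup>2 \<le> H (Re (rr \<omega> k))"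
      using nr_mid_bound[OF L w q1 q2 F1 F2 mid m] by (simp add: H_def d2_def)
    also have "\<dots> \<le> M" using M(3) Xge[OF w] by simp
    finally have "(nr L (complex_of_real m) \<omega> k)\<^sup>2 \<le> M" .
    thus "nr L (complex_of_real m) \<omega> k \<le> sqrt M" by (rule real_le_rsqrt)
  qed
  also have "sqrt M < sqrt (\<delta>\<^sup>2)" using M(1) by (rule real_sqrt_less_mono)
  hence "sqrt M < \<delta>" using d by simp
  hence "ereal (sqrt M) < ereal \<delta>" by simp
  finally show ?thesis .
qed

end

lemma g_lip:
  fixes X Y p q \<eta> :: real
  assumes X: "X > 0" and p: "p \<ge> \<eta>" and q: "q \<ge> \<eta>" and eta: "\<eta> > 0"
  shows "\<bar>4*p*X / ((p + X)\<^sup>2 + Y\<^sup>2) - 4*q*X / ((q + X)\<^sup>2 + Y\<^sup>2)\<bar> \<le> 4 * \<bar>p - q\<bar> / \<eta>"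
proof -
  define R where "R = X\<^sup>2 + Y\<^sup>2"
  define Dp where "Dp = (p + X)\<^sup>2 + Y\<^sup>2"
  define Dq where "Dq = (q + X)\<^sup>2 + Y\<^sup>2"
  have pp: "p > 0" and qp: "q > 0" using p q eta by auto
  have Rp: "R > 0" using X by (simp add: R_def add_pos_nonneg)
  have Dp1: "Dp \<ge> R" and Dp2: "Dp \<ge> 2*p*X" and Dq1: "Dq \<ge> q\<^sup>2" and Dq2: "Dq \<ge> 2*q*X"
    using pp qp X by (simp_all add: Dp_def Dq_def R_def power2_eq_square algebra_simps add_nonneg_nonneg)
  have Dpp: "Dp > 0" using Dp1 Rp by simp
  have Dqp: "Dq > 0" using Dq2 qp X by (smt (verit) mult_pos_pos)
  have ident: "4*p*X / Dp - 4*q*X / Dq = 4 * X * (p - q) * (R - p*q) / (Dp * Dq)"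
    using Dpp Dqp by (simp add: Dp_def Dq_def R_def field_simps power2_eq_square)
  have m1: "Dp * Dq \<ge> R * (2*q*X)" using Dp1 Dq2 Rp qp X by (intro mult_mono) auto
  have m2: "Dp * Dq \<ge> (2*p*X) * q\<^sup>2" using Dp2 Dq1 pp X Dpp by (intro mult_mono) auto
  have key: "X * (R + p*q) * q \<le> Dp * Dq"
  proof -
    have "X * (R + p*q) * q = (R * (2*q*X) + (2*p*X) * q\<^sup>2) / 2" by (simp add: algebra_simps power2_eq_square)
    moreover have "(R * (2*q*X) + (2*p*X) * q\<^sup>2) / 2 \<le> (Dp * Dq + Dp * Dq) / 2"
      using add_mono[OF m1 m2] by (simp add: divide_right_mono)
    ultimately show ?thesis by simp
  qed
  have "\<bar>R - p*q\<bar> \<le> R + p*q" using Rp pp qp by (simp add: abs_le_iff)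
  hence "\<bar>4 * X * (p - q) * (R - p*q)\<bar> \<le> 4 * X * \<bar>p - q\<bar> * (R + p*q)"
    using X by (simp add: abs_mult mult_left_mono)
  hence "\<bar>4 * X * (p - q) * (R - p*q) / (Dp * Dq)\<bar> \<le> 4 * X * \<bar>p - q\<bar> * (R + p*q) / (Dp * Dq)"
    using Dpp Dqp by (simp add: abs_divide divide_right_mono)
  also have "\<dots> = (4 * \<bar>p - q\<bar> * ((X * (R + p*q) * q) / (Dp * Dq))) / q" using qp Dpp Dqp by (simp add: field_simps)
  also have "\<dots> \<le> 4 * \<bar>p - q\<bar> * 1 / q"
  proof -
    have "(X * (R + p*q) * q) / (Dp * Dq) \<le> 1" using key Dpp Dqp by simp
    hence "4 * \<bar>p - q\<bar> * ((X * (R + p*q) * q) / (Dp * Dq)) \<le> 4 * \<bar>p - q\<bar> * 1" by (intro mult_left_mono) auto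
    thus ?thesis by (rule divide_right_mono) (use qp in simp)
  qed
  also have "\<dots> \<le> 4 * \<bar>p - q\<bar> / \<eta>" using q eta by (simp add: divide_left_mono)
  finally have fin: "\<bar>4 * X * (p - q) * (R - p*q) / (Dp * Dq)\<bar> \<le> 4 * \<bar>p - q\<bar> / \<eta>" .
  show ?thesis unfolding Dp_def[symmetric] Dq_def[symmetric] ident by (rule fin)
qed


context osw begin

lemma D_nonempty: "\<exists>\<omega> k. (\<omega>, k) \<in> Dinf \<omega>m km"
  using A_char by blast

lemma F_real_bounds:
  assumes L: "L \<ge> 0" and p: "p \<ge> 0"
  shows "F L (complex_of_real p) \<le> 1" "F L (complex_of_real p) \<ge> 0"
proof -
  have "F L (complex_of_real p) \<le> ereal 1"
    by (rule F_le) (rule nr_le_1[OF _ p L])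
  thus "F L (complex_of_real p) \<le> 1" by (simp add: one_ereal_def)
  obtain \<omega> k where w: "(\<omega>, k) \<in> Dinf \<omega>m km" using D_nonempty by blast
  have "ereal 0 \<le> ereal (nr L (complex_of_real p) \<omega> k)" by simp
  also have "\<dots> \<le> F L (complex_of_real p)" by (rule F_ge[OF w])
  finally show "F L (complex_of_real p) \<ge> 0" by (simp add: zero_ereal_def)
qed

definition fr where "fr L p = real_of_ereal (F L (complex_of_real p))"

lemma F_fr: "L \<ge> 0 \<Longrightarrow> p \<ge> 0 \<Longrightarrow> F L (complex_of_real p) = ereal (fr L p)"
  using F_real_bounds[of L p] unfolding fr_def
  by (cases "F L (complex_of_real p)") auto

lemma fr_bounds: "L \<ge> 0 \<Longrightarrow> p \<ge> 0 \<Longrightarrow> 0 \<le> fr L p \<and> fr L p \<le> 1"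
  using F_real_bounds[of L p] F_fr[of L p] by simp

lemma nr_le_fr: "L \<ge> 0 \<Longrightarrow> p \<ge> 0 \<Longrightarrow> (\<omega>, k) \<in> Dinf \<omega>m km \<Longrightarrow> nr L (complex_of_real p) \<omega> k \<le> fr L p"
  using F_ge[where \<omega>=\<omega> and k=k and L=L and q="complex_of_real p"] F_fr[of L p] by simp

lemma nr_lip:
  assumes L: "L \<ge> 0" and w: "(\<omega>, k) \<in> Dinf \<omega>m km" and p: "p \<ge> \<eta>" and q: "q \<ge> \<eta>" and eta: "\<eta> > 0"
  shows "nr L (complex_of_real p) \<omega> k \<le> nr L (complex_of_real q) \<omega> k + sqrt (4 * \<bar>p - q\<bar> / \<eta>)"
proof -
  define X where "X = Re (rr \<omega> k)"
  define Y where "Y = Im (rr \<omega> k)"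
  define e where "e = exp (- (L * X / \<nu>))"
  have Xp: "X > 0" using X_pos[OF w] by (simp add: X_def)
  have e1: "e \<le> 1" using L Xp nu_pos by (simp add: e_def)
  have e0: "e > 0" by (simp add: e_def)
  have dp: "(p + X)\<^sup>2 + Y\<^sup>2 > 0" using p eta Xp by (simp add: add_pos_nonneg)
  have dq: "(q + X)\<^sup>2 + Y\<^sup>2 > 0" using q eta Xp by (simp add: add_pos_nonneg)
  have np: "(nr L (complex_of_real p) \<omega> k)\<^sup>2 = (1 - 4*p*X / ((p + X)\<^sup>2 + Y\<^sup>2)) * e"
    using nr_real_sq[where \<omega>=\<omega> and k=k and p=p and L=L] dp by (simp add: X_def Y_def e_def)
  have nq: "(nr L (complex_of_real q) \<omega> k)\<^sup>2 = (1 - 4*q*X / ((q + X)\<^sup>2 + Y\<^sup>2)) * e"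
    using nr_real_sq[where \<omega>=\<omega> and k=k and p=q and L=L] dq by (simp add: X_def Y_def e_def)
  define cc where "cc = 4 * \<bar>p - q\<bar> / \<eta>"
  have cc0: "cc \<ge> 0" using eta by (simp add: cc_def)
  have gl: "\<bar>4*p*X / ((p + X)\<^sup>2 + Y\<^sup>2) - 4*q*X / ((q + X)\<^sup>2 + Y\<^sup>2)\<bar> \<le> cc"
    unfolding cc_def by (rule g_lip[OF Xp p q eta])
  have "(nr L (complex_of_real p) \<omega> k)\<^sup>2 - (nr L (complex_of_real q) \<omega> k)\<^sup>2
      = e * (4*q*X / ((q + X)\<^sup>2 + Y\<^sup>2) - 4*p*X / ((p + X)\<^sup>2 + Y\<^sup>2))"
    unfolding np nq by (simp add: algebra_simps)
  also have "\<dots> \<le> e * cc" using gl e0 by (intro mult_left_mono) auto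
  also have "\<dots> \<le> cc" using e1 cc0 e0 by (intro mult_left_le_one_le) auto
  finally have "(nr L (complex_of_real p) \<omega> k)\<^sup>2 \<le> (nr L (complex_of_real q) \<omega> k)\<^sup>2 + cc" by simp
  also have "\<dots> \<le> (nr L (complex_of_real q) \<omega> k + sqrt cc)\<^sup>2"
    using cc0 by (simp add: power2_sum)
  finally have sq: "(nr L (complex_of_real p) \<omega> k)\<^sup>2 \<le> (nr L (complex_of_real q) \<omega> k + sqrt cc)\<^sup>2" .
  have "0 \<le> nr L (complex_of_real q) \<omega> k + sqrt cc" using cc0 by simp
  from power2_le_imp_le[OF sq this] show ?thesis by (simp add: cc_def)
qed

lemma fr_lip:
  assumes L: "L \<ge> 0" and p: "p \<ge> \<eta>" and q: "q \<ge> \<eta>" and eta: "\<eta> > 0"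
  shows "\<bar>fr L p - fr L q\<bar> \<le> sqrt (4 * \<bar>p - q\<bar> / \<eta>)"
proof -
  have one: "fr L a \<le> fr L b + sqrt (4 * \<bar>a - b\<bar> / \<eta>)" if a: "a \<ge> \<eta>" and b: "b \<ge> \<eta>" for a b
  proof -
    have "F L (complex_of_real a) \<le> ereal (fr L b + sqrt (4 * \<bar>a - b\<bar> / \<eta>))"
    proof (rule F_le)
      fix \<omega> k assume w: "(\<omega>, k) \<in> Dinf \<omega>m km"
      have "nr L (complex_of_real a) \<omega> k \<le> nr L (complex_of_real b) \<omega> k + sqrt (4 * \<bar>a - b\<bar> / \<eta>)"
        by (rule nr_lip[OF L w a b eta])
      also have "nr L (complex_of_real b) \<omega> k \<le> fr L b" using nr_le_fr[OF L _ w] b eta by simp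
      finally show "nr L (complex_of_real a) \<omega> k \<le> fr L b + sqrt (4 * \<bar>a - b\<bar> / \<eta>)" by simp
    qed
    thus ?thesis using F_fr[OF L, of a] a eta by simp
  qed
  show ?thesis using one[OF p q] one[OF q p] by (simp add: abs_le_iff abs_minus_commute)
qed

lemma fr_cont:
  assumes L: "L \<ge> 0" and eta: "\<eta> > 0"
  shows "continuous_on {\<eta>..B} (fr L)"
  unfolding continuous_on_iff
proof (intro ballI allI impI)
  fix x e :: real assume x: "x \<in> {\<eta>..B}" and e: "e > 0"
  define d where "d = e\<^sup>2 * \<eta> / 8"
  have d: "d > 0" using e eta by (simp add: d_def)
  show "\<exists>d>0. \<forall>x'\<in>{\<eta>..B}. dist x' x < d \<longrightarrow> dist (fr L x') (fr L x) < e"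
  proof (intro exI[of _ d] conjI ballI impI d)
    fix x' assume x': "x' \<in> {\<eta>..B}" and dx: "dist x' x < d"
    have "dist (fr L x') (fr L x) \<le> sqrt (4 * \<bar>x' - x\<bar> / \<eta>)"
      using fr_lip[OF L _ _ eta, of x' x] x x' by (simp add: dist_real_def)
    also have "4 * \<bar>x' - x\<bar> / \<eta> < e\<^sup>2"
    proof -
      have "\<bar>x' - x\<bar> < e\<^sup>2 * \<eta> / 8" using dx by (simp add: dist_real_def d_def)
      hence "4 * \<bar>x' - x\<bar> < e\<^sup>2 * \<eta> / 2" by simp
      hence "4 * \<bar>x' - x\<bar> / \<eta> < e\<^sup>2 / 2" using eta by (simp add: field_simps)
      moreover have "e\<^sup>2 / 2 \<le> e\<^sup>2" by simp
      ultimately show ?thesis by linarith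
    qed
    hence "sqrt (4 * \<bar>x' - x\<bar> / \<eta>) < sqrt (e\<^sup>2)" by (rule real_sqrt_less_mono)
    hence "sqrt (4 * \<bar>x' - x\<bar> / \<eta>) < e" using e by simp
    finally show "dist (fr L x') (fr L x) < e" .
  qed
qed

end

lemma loc_alg:
  fixes a b X0 Y0 t :: real
  assumes h1: "(a - X0)\<^sup>2 + (b - Y0)\<^sup>2 \<le> t\<^sup>2 * ((a + X0)\<^sup>2 + (b + Y0)\<^sup>2)"
    and h2: "(a - X0)\<^sup>2 + (b + Y0)\<^sup>2 \<le> t\<^sup>2 * ((a + X0)\<^sup>2 + (b - Y0)\<^sup>2)"
    and X0: "X0 > 0" and t: "t \<ge> 0" "t < 1"
  shows "a \<ge> (1 - t\<^sup>2) * X0 / (2 * (1 + t\<^sup>2))" "sqrt (a\<^sup>2 + b\<^sup>2) \<le> 2 * X0 * (1 + t\<^sup>2) / (1 - t\<^sup>2)"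
proof -
  define S where "S = a\<^sup>2 + b\<^sup>2 + X0\<^sup>2 + Y0\<^sup>2"
  define u where "u = t\<^sup>2"
  have u: "u \<ge> 0" "u < 1" using t by (simp_all add: u_def power_less_one_iff)
  have sum: "((a - X0)\<^sup>2 + (b - Y0)\<^sup>2) + ((a - X0)\<^sup>2 + (b + Y0)\<^sup>2) \<le> u * ((a + X0)\<^sup>2 + (b + Y0)\<^sup>2) + u * ((a + X0)\<^sup>2 + (b - Y0)\<^sup>2)"
    using add_mono[OF h1 h2] by (simp add: u_def)
  have eqL: "((a - X0)\<^sup>2 + (b - Y0)\<^sup>2) + ((a - X0)\<^sup>2 + (b + Y0)\<^sup>2) = 2*S - 4*a*X0"
    by (simp add: S_def power2_eq_square algebra_simps)
  have eqR: "u * ((a + X0)\<^sup>2 + (b + Y0)\<^sup>2) + u * ((a + X0)\<^sup>2 + (b - Y0)\<^sup>2) = u * (2*S + 4*a*X0)"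
    by (simp add: S_def power2_eq_square algebra_simps)
  have main: "(1 - u) * S \<le> (2*a*X0) * (1 + u)"
  proof -
    have "2*S - 4*a*X0 \<le> u * (2*S + 4*a*X0)" using sum eqL eqR by simp
    thus ?thesis by (simp add: algebra_simps)
  qed
  have S1: "S \<ge> X0\<^sup>2" by (simp add: S_def)
  have S2: "S \<ge> a\<^sup>2 + b\<^sup>2" by (simp add: S_def)
  have "(1 - u) * X0\<^sup>2 \<le> (1 - u) * S" using S1 u by (intro mult_left_mono) auto
  hence ha: "(1 - u) * X0\<^sup>2 \<le> (2*a*X0) * (1 + u)" using main by linarith
  show "a \<ge> (1 - t\<^sup>2) * X0 / (2 * (1 + t\<^sup>2))"
  proof -
    have "(1 - u) * X0 * X0 \<le> (2*a*(1+u)) * X0" using ha by (simp add: power2_eq_square algebra_simps)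
    hence "(1 - u) * X0 \<le> 2*a*(1+u)" using X0 by simp
    moreover have pos: "2 * (1 + u) > 0" using u by simp
    ultimately show ?thesis unfolding u_def[symmetric] by (subst pos_divide_le_eq[OF pos]) (simp add: algebra_simps)
  qed
  define n where "n = sqrt (a\<^sup>2 + b\<^sup>2)"
  have n0: "n \<ge> 0" by (simp add: n_def)
  have n2: "n\<^sup>2 = a\<^sup>2 + b\<^sup>2" by (simp add: n_def)
  have an: "a \<le> n" unfolding n_def by (rule real_sqrt_sum_squares_ge1)
  have "(1 - u) * n\<^sup>2 \<le> (1 - u) * S" using S2 u n2 by (intro mult_left_mono) auto
  also have "\<dots> \<le> (2*a*X0) * (1 + u)" by (rule main)
  also have "\<dots> \<le> (2*n*X0) * (1 + u)" using an X0 u by (intro mult_right_mono) auto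
  finally have hn: "(1 - u) * n\<^sup>2 \<le> (2*n*X0) * (1 + u)" .
  show "sqrt (a\<^sup>2 + b\<^sup>2) \<le> 2 * X0 * (1 + t\<^sup>2) / (1 - t\<^sup>2)"
  proof (cases "n = 0")
    case True thus ?thesis using X0 u by (simp add: n_def[symmetric] u_def)
  next
    case False
    hence np: "n > 0" using n0 by simp
    have "((1 - u) * n) * n \<le> (2*X0*(1+u)) * n" using hn by (simp add: power2_eq_square algebra_simps)
    hence "(1 - u) * n \<le> 2*X0*(1+u)" using np by simp
    moreover have pos: "1 - u > 0" using u by simp
    ultimately show ?thesis unfolding u_def[symmetric] n_def[symmetric] by (subst pos_le_divide_eq[OF pos]) (simp add: algebra_simps)
  qed
qed


context osw begin

lemma F_nz:
  assumes L: "L > 0" and F: "F L q \<le> ereal \<delta>0" and w: "(\<omega>, k) \<in> Dinf \<omega>m km"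
  shows "q + rr \<omega> k \<noteq> 0"
proof
  assume "q + rr \<omega> k = 0"
  from F_zero_denom[OF L w this, of "\<delta>0 + 1"] F have "ereal (\<delta>0 + 1) \<le> ereal \<delta>0" by (rule order_trans)
  thus False by simp
qed

lemma ratio_sq:
  assumes L: "L > 0" and F: "F L q \<le> ereal \<delta>0" and w: "(\<omega>, k) \<in> Dinf \<omega>m km"
  shows "(cmod (q - rr \<omega> k))\<^sup>2 \<le> (\<delta>0 * exp (L * Re (rr \<omega> k) / (2 * \<nu>)))\<^sup>2 * (cmod (q + rr \<omega> k))\<^sup>2"
proof -
  define r where "r = rr \<omega> k"
  define E where "E = exp (- (L / (2 * \<nu>)) * Re r)"
  have pos: "cmod (q + r) > 0" using F_nz[OF L F w] by (simp add: r_def)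
  have "ereal (nr L q \<omega> k) \<le> ereal \<delta>0" using F_ge[OF w, where L=L and q=q] F by (rule order_trans)
  hence n: "cmod (q - r) / cmod (q + r) * E \<le> \<delta>0" by (simp add: norm_rho r_def E_def)
  have EE: "E * exp (L * Re r / (2 * \<nu>)) = 1" by (simp add: E_def exp_add[symmetric])
  have nn: "cmod (q - r) * E \<le> \<delta>0 * cmod (q + r)" using n pos by (simp add: field_simps)
  have le: "cmod (q - r) \<le> (\<delta>0 * exp (L * Re r / (2 * \<nu>))) * cmod (q + r)"
  proof -
    have "cmod (q - r) = cmod (q - r) * (E * exp (L * Re r / (2 * \<nu>)))" using EE by simp
    also have "\<dots> = (cmod (q - r) * E) * exp (L * Re r / (2 * \<nu>))" by (simp only: mult.assoc)
    also have "\<dots> \<le> (\<delta>0 * cmod (q + r)) * exp (L * Re r / (2 * \<nu>))" by (rule mult_right_mono[OF nn]) simp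
    also have "\<dots> = (\<delta>0 * exp (L * Re r / (2 * \<nu>))) * cmod (q + r)" by (simp only: mult_ac)
    finally show ?thesis .
  qed
  have "(cmod (q - r))\<^sup>2 \<le> ((\<delta>0 * exp (L * Re r / (2 * \<nu>))) * cmod (q + r))\<^sup>2"
    by (rule power_mono[OF le]) simp
  thus ?thesis by (simp add: r_def power_mult_distrib)
qed

lemma localize:
  assumes L: "L > 0" and w0: "(\<omega>0, k0) \<in> Dinf \<omega>m km" and X0: "Re (rr \<omega>0 k0) = X0"
    and F: "F L q \<le> ereal \<delta>0" and t0: "\<delta>0 \<ge> 0" and t1: "\<delta>0 * exp (L * X0 / (2 * \<nu>)) < 1"
  shows "Re q \<ge> (1 - (\<delta>0 * exp (L * X0 / (2 * \<nu>)))\<^sup>2) * X0 / (2 * (1 + (\<delta>0 * exp (L * X0 / (2 * \<nu>)))\<^sup>2))"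
    and "cmod q \<le> 2 * X0 * (1 + (\<delta>0 * exp (L * X0 / (2 * \<nu>)))\<^sup>2) / (1 - (\<delta>0 * exp (L * X0 / (2 * \<nu>)))\<^sup>2)"
proof -
  define t where "t = \<delta>0 * exp (L * X0 / (2 * \<nu>))"
  have t: "t \<ge> 0" "t < 1" using t0 t1 by (simp_all add: t_def)
  have X0p: "X0 > 0" using X_pos[OF w0] X0 by simp
  define r0 where "r0 = rr \<omega>0 k0"
  have w0': "(-\<omega>0, -k0) \<in> Dinf \<omega>m km" by (rule D_neg[OF w0])
  have rn: "rr (-\<omega>0) (-k0) = cnj r0" using rr_neg[OF w0] by (simp add: r0_def)
  have s1: "(cmod (q - r0))\<^sup>2 \<le> t\<^sup>2 * (cmod (q + r0))\<^sup>2"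
    using ratio_sq[OF L F w0] X0 by (simp add: t_def r0_def)
  have s2: "(cmod (q - cnj r0))\<^sup>2 \<le> t\<^sup>2 * (cmod (q + cnj r0))\<^sup>2"
    using ratio_sq[OF L F w0'] X0 rn by (simp add: t_def r0_def)
  have h1: "(Re q - X0)\<^sup>2 + (Im q - Im r0)\<^sup>2 \<le> t\<^sup>2 * ((Re q + X0)\<^sup>2 + (Im q + Im r0)\<^sup>2)"
    using s1 X0 by (simp add: cmod_power2 r0_def)
  have h2: "(Re q - X0)\<^sup>2 + (Im q + Im r0)\<^sup>2 \<le> t\<^sup>2 * ((Re q + X0)\<^sup>2 + (Im q - Im r0)\<^sup>2)"
    using s2 X0 by (simp add: cmod_power2 r0_def)
  note la = loc_alg[OF h1 h2 X0p t]
  show "Re q \<ge> (1 - (\<delta>0 * exp (L * X0 / (2 * \<nu>)))\<^sup>2) * X0 / (2 * (1 + (\<delta>0 * exp (L * X0 / (2 * \<nu>)))\<^sup>2))"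
    using la(1) by (simp add: t_def)
  show "cmod q \<le> 2 * X0 * (1 + (\<delta>0 * exp (L * X0 / (2 * \<nu>)))\<^sup>2) / (1 - (\<delta>0 * exp (L * X0 / (2 * \<nu>)))\<^sup>2)"
    using la(2) by (simp add: t_def cmod_def)
qed


lemma nr_zero:
  assumes "nr L q \<omega> k = 0"
  shows "q = rr \<omega> k \<or> q = - rr \<omega> k"
proof -
  have "cmod (q - rr \<omega> k) / cmod (q + rr \<omega> k) = 0" using assms by (simp add: norm_rho)
  hence "q - rr \<omega> k = 0 \<or> q + rr \<omega> k = 0" by simp
  thus ?thesis by (auto simp: eq_neg_iff_add_eq_0)
qed

lemma F_pos: "F L q > 0"
proof (rule ccontr)
  assume "\<not> F L q > 0"
  hence F0: "F L q \<le> ereal 0" by (simp add: zero_ereal_def not_less)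
  obtain \<omega>0 k0 where w0: "(\<omega>0, k0) \<in> Dinf \<omega>m km" using D_nonempty by blast
  define X0 where "X0 = Re (rr \<omega>0 k0)"
  have X0p: "X0 > 0" using X_pos[OF w0] by (simp add: X0_def)
  define a1 where "a1 = x0sq + 4 * \<nu>\<^sup>2 * km\<^sup>2"
  define b1 where "b1 = 4 * \<nu> * (\<omega>m + \<bar>c\<bar> * km)"
  have a1: "a1 \<ge> 0" using x0_nn by (simp add: a1_def)
  have b1: "b1 \<ge> 0" using nu_pos wm_pos km_nn by (simp add: b1_def)
  define X1 where "X1 = X0 + 1 + 2 * a1 + b1"
  have X1g: "X1 \<ge> 1" using X0p a1 b1 by (simp add: X1_def)
  have "X1 \<le> X1\<^sup>2" using X1g by (simp add: power2_eq_square)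
  hence c1: "X1\<^sup>2 \<ge> 2 * a1" "X1\<^sup>2 \<ge> b1" using X0p a1 b1 by (simp_all add: X1_def)
  obtain \<omega>1 where w1: "(\<omega>1, km) \<in> Dinf \<omega>m km" "Re (rr \<omega>1 km) = X1"
    using high_witness[of X1] X1g c1 by (auto simp: a1_def b1_def)
  have n0: "nr L q \<omega>0 k0 = 0"
  proof -
    have "ereal (nr L q \<omega>0 k0) \<le> ereal 0" using F_ge[OF w0, where L=L and q=q] F0 by (rule order_trans)
    hence "nr L q \<omega>0 k0 \<le> 0" by simp
    thus ?thesis using norm_ge_zero[of "rho \<nu> c x0sq \<omega>0 k0 q 0 L"] by (rule antisym)
  qed
  have n1: "nr L q \<omega>1 km = 0"
  proof -
    have "ereal (nr L q \<omega>1 km) \<le> ereal 0" using F_ge[OF w1(1), where L=L and q=q] F0 by (rule order_trans)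
    hence "nr L q \<omega>1 km \<le> 0" by simp
    thus ?thesis using norm_ge_zero[of "rho \<nu> c x0sq \<omega>1 km q 0 L"] by (rule antisym)
  qed
  have "Re q = X0 \<or> Re q = - X0" using nr_zero[OF n0] by (auto simp: X0_def)
  moreover have "Re q = X1 \<or> Re q = - X1" using nr_zero[OF n1] w1(2) by auto
  moreover have "X1 > X0" using a1 b1 by (simp add: X1_def)
  ultimately show False using X0p by auto
qed

theorem fixed_L:
  assumes L: "L > 0" and p0: "p0 > 0" and d0: "\<delta>0 \<ge> 0" and F0: "F L (complex_of_real p0) \<le> ereal \<delta>0"
    and t1: "\<delta>0 * exp (L * (Aconst \<nu> c x0sq \<omega>m km / 4) / (2 * \<nu>)) < 1"
  shows "\<exists>p>0. F L (complex_of_real p) \<le> ereal \<delta>0 \<and>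
           (\<forall>q. F L (complex_of_real p) \<le> F L q \<and> (F L q = F L (complex_of_real p) \<longrightarrow> q = complex_of_real p))"
proof -
  obtain \<omega>0 k0 where A: "(\<omega>0, k0) \<in> Dinf \<omega>m km" "4 * Re (rr \<omega>0 k0) = Aconst \<nu> c x0sq \<omega>m km"
    using A_char by blast
  define X0 where "X0 = Re (rr \<omega>0 k0)"
  have X0A: "Aconst \<nu> c x0sq \<omega>m km / 4 = X0" using A(2) by (simp add: X0_def)
  have X0p: "X0 > 0" using X_pos[OF A(1)] by (simp add: X0_def)
  define t where "t = \<delta>0 * exp (L * X0 / (2 * \<nu>))"
  have t: "t \<ge> 0" "t < 1" using d0 t1 X0A by (simp_all add: t_def)
  have t2: "t\<^sup>2 < 1" using t by (simp add: power_less_one_iff)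
  define \<eta> where "\<eta> = (1 - t\<^sup>2) * X0 / (2 * (1 + t\<^sup>2))"
  define B where "B = 2 * X0 * (1 + t\<^sup>2) / (1 - t\<^sup>2)"
  have eta: "\<eta> > 0" using t2 X0p by (simp add: \<eta>_def add_pos_nonneg)
  have loc: "Re q \<ge> \<eta> \<and> cmod q \<le> B" if "F L q \<le> ereal \<delta>0" for q
    using localize[OF L A(1) X0_def[symmetric] that d0] t1 X0A by (simp add: \<eta>_def B_def t_def)
  have locR: "Re q \<in> {\<eta>..B}" if "F L q \<le> ereal \<delta>0" for q
    using loc[OF that] complex_Re_le_cmod[of q] by auto
  have p0I: "p0 \<in> {\<eta>..B}" using locR[OF F0] by simp
  have cont: "continuous_on {\<eta>..B} (fr L)" by (rule fr_cont) (use L eta in auto)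
  obtain ps where ps: "ps \<in> {\<eta>..B}" "\<And>y. y \<in> {\<eta>..B} \<Longrightarrow> fr L ps \<le> fr L y"
    using continuous_attains_inf[OF compact_Icc _ cont] p0I by auto
  have psp: "ps > 0" using ps(1) eta by simp
  have Fps: "F L (complex_of_real ps) = ereal (fr L ps)" using F_fr[of L ps] L psp by simp
  have Fy: "F L (complex_of_real y) = ereal (fr L y)" if "y \<in> {\<eta>..B}" for y using F_fr[of L y] L that eta by simp
  have Fps_le: "F L (complex_of_real ps) \<le> ereal \<delta>0"
  proof -
    have "F L (complex_of_real ps) \<le> F L (complex_of_real p0)" using Fps Fy[OF p0I] ps(2)[OF p0I] by simp
    thus ?thesis using F0 by (rule order_trans)
  qed
  have Fps_min: "F L (complex_of_real ps) \<le> F L (complex_of_real y)" if "y \<in> {\<eta>..B}" for y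
    using Fps Fy[OF that] ps(2)[OF that] by simp
  have strict: "F L (complex_of_real (Re q)) < F L q" if Fq: "F L q \<le> ereal \<delta>0" and Im: "Im q \<noteq> 0" for q
  proof -
    have Rq: "Re q \<ge> \<eta>" using loc[OF Fq] by simp
    obtain \<delta> where Fd: "F L q = ereal \<delta>"
      using Fq F_pos[of L q] by (cases "F L q") auto
    have dpos: "\<delta> > 0" using F_pos[of L q] Fd by simp
    have ne: "q \<noteq> cnj q" using Im by (metis cnj.simps(2) neg_equal_zero)
    have Fc: "F L (cnj q) \<le> ereal \<delta>" using F_cnj[of L q] Fd by simp
    have mid: "(q + cnj q) / 2 = complex_of_real (Re q)" by (simp add: complex_add_cnj)
    have "F L (complex_of_real (Re q)) < ereal \<delta>"
      by (rule mid_strict[OF L ne _ _ _ Fc mid _ dpos]) (use Rq eta Fd in auto)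
    thus ?thesis using Fd by simp
  qed
  have minimal: "F L (complex_of_real ps) \<le> F L q" for q
  proof (cases "F L q \<le> ereal \<delta>0")
    case False thus ?thesis using Fps_le by auto
  next
    case True
    have R: "Re q \<in> {\<eta>..B}" by (rule locR[OF True])
    show ?thesis
    proof (cases "Im q = 0")
      case True
      hence "q = complex_of_real (Re q)" by (simp add: complex_eq_iff)
      thus ?thesis using Fps_min[OF R] by simp
    next
      case False
      thus ?thesis using strict[OF \<open>F L q \<le> ereal \<delta>0\<close> False] Fps_min[OF R] by simp
    qed
  qed
  have unique: "q = complex_of_real ps" if eq: "F L q = F L (complex_of_real ps)" for q
  proof -
    have Fq: "F L q \<le> ereal \<delta>0" using eq Fps_le by simp
    have R: "Re q \<in> {\<eta>..B}" by (rule locR[OF Fq])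
    have Im0: "Im q = 0"
    proof (rule ccontr)
      assume "Im q \<noteq> 0"
      from strict[OF Fq this] Fps_min[OF R] eq show False by simp
    qed
    hence qR: "q = complex_of_real (Re q)" by (simp add: complex_eq_iff)
    show ?thesis
    proof (rule ccontr)
      assume "q \<noteq> complex_of_real ps"
      hence ne: "complex_of_real ps \<noteq> complex_of_real (Re q)" using qR by simp
      define m where "m = (ps + Re q) / 2"
      have mI: "m \<in> {\<eta>..B}" using R ps(1) by (simp add: m_def)
      have dpos: "fr L ps > 0" using F_pos[of L "complex_of_real ps"] Fps by simp
      have F2: "F L (complex_of_real (Re q)) \<le> ereal (fr L ps)" using eq qR Fps by simp
      have mid: "(complex_of_real ps + complex_of_real (Re q)) / 2 = complex_of_real m" by (simp add: m_def)
      have "F L (complex_of_real m) < ereal (fr L ps)"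
        by (rule mid_strict[OF L ne _ _ _ F2 mid _ dpos]) (use psp R eta Fps mI in auto)
      thus False using Fps_min[OF mI] Fps by simp
    qed
  qed
  show ?thesis using psp Fps_le minimal unique by blast
qed

end

context osw begin

definition A0 where "A0 = Aconst \<nu> c x0sq \<omega>m km"
definition p0 where "p0 L = (1/2) * root 3 (\<nu> * A0\<^sup>2 / L)"
definition aL where "aL L = A0 / p0 L"

lemma A0_props: "A0 > 0" "\<And>\<omega> k. (\<omega>, k) \<in> Dinf \<omega>m km \<Longrightarrow> Re (rr \<omega> k) \<ge> A0 / 4"
    "\<exists>\<omega>0 k0. (\<omega>0, k0) \<in> Dinf \<omega>m km \<and> Re (rr \<omega>0 k0) = A0 / 4"
proof -
  obtain \<omega>0 k0 where A: "(\<omega>0, k0) \<in> Dinf \<omega>m km" "4 * Re (rr \<omega>0 k0) = A0"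
      "\<And>\<omega> k. (\<omega>, k) \<in> Dinf \<omega>m km \<Longrightarrow> 4 * Re (rr \<omega> k) \<ge> A0"
    using A_char unfolding A0_def by blast
  show "A0 > 0" using X_pos[OF A(1)] A(2) by simp
  show "\<And>\<omega> k. (\<omega>, k) \<in> Dinf \<omega>m km \<Longrightarrow> Re (rr \<omega> k) \<ge> A0 / 4" using A(3) by fastforce
  show "\<exists>\<omega>0 k0. (\<omega>0, k0) \<in> Dinf \<omega>m km \<and> Re (rr \<omega>0 k0) = A0 / 4" using A(1,2) by (intro exI[of _ \<omega>0] exI[of _ k0]) simp
qed

lemma p0_props:
  assumes L: "L > 0"
  shows "p0 L > 0" "aL L > 0" "p0 L = A0 / aL L" "L / \<nu> = (aL L)^3 / (8 * A0)"
proof -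
  have Ap: "A0 > 0" by (rule A0_props(1))
  have arg: "\<nu> * A0\<^sup>2 / L > 0" using nu_pos Ap L by simp
  show pp: "p0 L > 0" unfolding p0_def using arg by simp
  show "aL L > 0" unfolding aL_def using pp Ap by simp
  show "p0 L = A0 / aL L" unfolding aL_def using pp Ap by simp
  have cube: "(p0 L)^3 = \<nu> * A0\<^sup>2 / (8 * L)"
  proof -
    have "(root 3 (\<nu> * A0\<^sup>2 / L))^3 = \<nu> * A0\<^sup>2 / L" using arg by (simp add: real_root_pow_pos2)
    moreover have "((1/2) * root 3 (\<nu> * A0\<^sup>2 / L))^3 = (1/8) * (root 3 (\<nu> * A0\<^sup>2 / L))^3"
      by (simp add: power_mult_distrib power_divide)
    ultimately show ?thesis unfolding p0_def by simp
  qed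
  show "L / \<nu> = (aL L)^3 / (8 * A0)"
    unfolding aL_def using cube pp Ap L nu_pos by (simp add: power_divide field_simps power2_eq_square power3_eq_cube)
qed


lemma upper_p0:
  assumes L: "L > 0"
  shows "F L (complex_of_real (p0 L)) \<le> ereal (exp (- (aL L - (aL L)\<^sup>2) / 2))"
proof (rule F_le)
  fix \<omega> k assume w: "(\<omega>, k) \<in> Dinf \<omega>m km"
  define a where "a = aL L"
  define p where "p = p0 L"
  define X where "X = Re (rr \<omega> k)"
  note pp = p0_props[OF L]
  have ap: "a > 0" and p: "p > 0" and pa: "p = A0 / a" and La: "L / \<nu> = a^3 / (8 * A0)"
    using pp by (simp_all add: a_def p_def)
  have Ap: "A0 > 0" by (rule A0_props(1))
  have XA: "X \<ge> A0 / 4" using A0_props(2)[OF w] by (simp add: X_def)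
  have Xp: "X > 0" using XA Ap by simp
  define y where "y = X / p"
  have yp: "y > 0" using Xp p by (simp add: y_def)
  have ya: "y \<ge> a / 4"
  proof -
    have "a / 4 = (A0 / 4) / p" using pa ap p by (simp add: field_simps)
    moreover have "(A0 / 4) / p \<le> X / p" using XA by (rule divide_right_mono) (use p in simp)
    ultimately show ?thesis by (simp add: y_def)
  qed
  define u where "u = 4*p*X / ((p + X)\<^sup>2 + X\<^sup>2)"
  have d1: "(p + X)\<^sup>2 + X\<^sup>2 = p\<^sup>2 * (1 + 2*y + 2*y\<^sup>2)" using p by (simp add: y_def field_simps power2_eq_square)
  have n1: "4*p*X = p\<^sup>2 * (4*y)" using p by (simp add: y_def field_simps power2_eq_square)
  have u_eq: "u = 4 * y / (1 + 2*y + 2*y\<^sup>2)"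
    unfolding u_def d1 n1 using p by simp
  have LX: "L * X / \<nu> = a\<^sup>2 * y / 8"
  proof -
    have "L * X / \<nu> = (L / \<nu>) * X" by simp
    also have "\<dots> = a^3 / (8 * A0) * X" by (simp only: La)
    also have "\<dots> = a\<^sup>2 * y / 8" using pa ap Ap p by (simp add: y_def field_simps power2_eq_square power3_eq_cube)
    finally show ?thesis .
  qed
  have fb: "u + L * X / \<nu> \<ge> a - a\<^sup>2" unfolding u_eq LX using f_bound[of a y] ap ya yp by simp
  have "(nr L (complex_of_real p) \<omega> k)\<^sup>2 \<le> (1 - u) * exp (- (L * X / \<nu>))"
    using nr_upper[OF w p, where L=L] by (simp add: u_def X_def)
  also have "\<dots> \<le> exp (- u) * exp (- (L * X / \<nu>))"
    using exp_ge_add_one_self[of "-u"] by (intro mult_right_mono) auto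
  also have "\<dots> = exp (- (u + L * X / \<nu>))" by (simp add: exp_add[symmetric])
  also have "\<dots> \<le> exp (- (a - a\<^sup>2))" using fb by simp
  also have "\<dots> = (exp (- (a - a\<^sup>2) / 2))\<^sup>2" by (simp add: power2_eq_square exp_add[symmetric])
  finally have "(nr L (complex_of_real p) \<omega> k)\<^sup>2 \<le> (exp (- (a - a\<^sup>2) / 2))\<^sup>2" .
  from power2_le_imp_le[OF this] show "nr L (complex_of_real (p0 L)) \<omega> k \<le> exp (- (aL L - (aL L)\<^sup>2) / 2)"
    by (simp add: a_def p_def)
qed

lemma lower_low:
  assumes L: "L > 0" and p: "p > 0"
  shows "(fr L p)\<^sup>2 \<ge> (1 - A0 / p) * exp (- ((aL L)^3 / 32))"
proof -
  obtain \<omega>0 k0 where w0: "(\<omega>0, k0) \<in> Dinf \<omega>m km" "Re (rr \<omega>0 k0) = A0 / 4" using A0_props(3) by blast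
  have La: "L / \<nu> = (aL L)^3 / (8 * A0)" using p0_props[OF L] by simp
  have Ap: "A0 > 0" by (rule A0_props(1))
  have h0: "(1 - 4 * (A0/4) / p) * exp (- (L * (A0/4) / \<nu>)) \<le> (nr L (complex_of_real p) \<omega>0 k0)\<^sup>2"
    using nr_lower_low[OF w0(1) p, where L=L] w0(2) by simp
  have eqn: "L * (A0/4) / \<nu> = (aL L)^3 / 32"
  proof -
    have "L * (A0/4) / \<nu> = (L / \<nu>) * (A0 / 4)" by simp
    also have "\<dots> = (aL L)^3 / 32" unfolding La using Ap by simp
    finally show ?thesis .
  qed
  have eq2: "4 * (A0/4) / p = A0 / p" by simp
  have h1: "(1 - A0 / p) * exp (- ((aL L)^3 / 32)) \<le> (nr L (complex_of_real p) \<omega>0 k0)\<^sup>2"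
    using h0 by (simp only: eqn eq2)
  have "nr L (complex_of_real p) \<omega>0 k0 \<le> fr L p" using nr_le_fr[OF _ _ w0(1)] L p by simp
  hence h2: "(nr L (complex_of_real p) \<omega>0 k0)\<^sup>2 \<le> (fr L p)\<^sup>2" by (intro power_mono) simp_all
  show ?thesis using h1 h2 by (rule order_trans)
qed

definition a1c where "a1c = x0sq + 4 * \<nu>\<^sup>2 * km\<^sup>2"
definition b1c where "b1c = 4 * \<nu> * (\<omega>m + \<bar>c\<bar> * km)"
definition kap where "kap = min 1 (A0\<^sup>2 / (a1c + b1c + 1))"

lemma kap_pos: "kap > 0"
proof -
  have "a1c \<ge> 0" "b1c \<ge> 0" using x0_nn nu_pos wm_pos km_nn by (simp_all add: a1c_def b1c_def)
  thus ?thesis using A0_props(1) by (simp add: kap_def)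
qed

lemma lower_high:
  assumes L: "L > 0" and p: "p > 0" and ak: "aL L \<le> kap"
  shows "(fr L p)\<^sup>2 \<ge> (1 - 4 * p * (4 * A0 / (aL L)\<^sup>2) / (2 * (4 * A0 / (aL L)\<^sup>2)\<^sup>2 - a1c)) * exp (- (aL L / 2))"
proof -
  define a where "a = aL L"
  define X1 where "X1 = 4 * A0 / a\<^sup>2"
  have ap: "a > 0" using p0_props[OF L] by (simp add: a_def)
  have Ap: "A0 > 0" by (rule A0_props(1))
  have a1: "a1c \<ge> 0" and b1: "b1c \<ge> 0" using x0_nn nu_pos wm_pos km_nn by (simp_all add: a1c_def b1c_def)
  have X1p: "X1 > 0" using Ap ap by (simp add: X1_def)
  have a_le1: "a \<le> 1" and a_le: "a \<le> A0\<^sup>2 / (a1c + b1c + 1)" using ak by (simp_all add: a_def kap_def)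
  have a4: "a^4 \<le> a" using power_decreasing[of 1 4 a] ap a_le1 by simp
  have big: "X1\<^sup>2 \<ge> 16 * (a1c + b1c + 1)"
  proof -
    have "a^4 * (a1c + b1c + 1) \<le> A0\<^sup>2"
    proof -
      have "a * (a1c + b1c + 1) \<le> A0\<^sup>2" using a_le a1 b1 by (simp add: field_simps)
      moreover have "a^4 * (a1c + b1c + 1) \<le> a * (a1c + b1c + 1)" using a4 a1 b1 by (intro mult_right_mono) auto
      ultimately show ?thesis by linarith
    qed
    moreover have "X1\<^sup>2 = 16 * A0\<^sup>2 / a^4" by (simp add: X1_def power_divide power_mult_distrib power2_eq_square[of a] power4_eq_xxxx)
    ultimately have "16 * (a1c + b1c + 1) * a^4 \<le> X1\<^sup>2 * a^4" using ap by (simp add: field_simps)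
    thus ?thesis by (rule mult_right_le_imp_le) (use ap in simp)
  qed
  have c1: "X1\<^sup>2 \<ge> 2 * (x0sq + 4 * \<nu>\<^sup>2 * km\<^sup>2)" using big a1 b1 by (simp add: a1c_def[symmetric])
  have c2: "X1\<^sup>2 \<ge> 4 * \<nu> * (\<omega>m + \<bar>c\<bar> * km)" using big a1 b1 by (simp add: b1c_def[symmetric])
  obtain \<omega>1 where w1: "(\<omega>1, km) \<in> Dinf \<omega>m km" "Re (rr \<omega>1 km) = X1" "(Im (rr \<omega>1 km))\<^sup>2 = X1\<^sup>2 - a1c"
    using high_witness[OF X1p c1 c2] by (auto simp: a1c_def)
  have big': "16*a1c + 16*b1c + 16 \<le> X1\<^sup>2" using big by simp
  have den: "2 * X1\<^sup>2 - a1c > 0" using big' a1 b1 by linarith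
  have dp: "(p + X1)\<^sup>2 + (Im (rr \<omega>1 km))\<^sup>2 \<ge> 2 * X1\<^sup>2 - a1c"
  proof -
    have e: "(p + X1)\<^sup>2 + (Im (rr \<omega>1 km))\<^sup>2 = (p * p + 2 * p * X1) + (2 * X1\<^sup>2 - a1c)"
      using w1(3) by (simp add: power2_eq_square algebra_simps)
    have "p * p + 2 * p * X1 \<ge> 0" using p X1p by simp
    thus ?thesis using e by linarith
  qed
  have dp0: "(p + Re (rr \<omega>1 km))\<^sup>2 + (Im (rr \<omega>1 km))\<^sup>2 > 0" using dp den w1(2) by simp
  have "4*p*X1 / ((p + X1)\<^sup>2 + (Im (rr \<omega>1 km))\<^sup>2) \<le> 4*p*X1 / (2 * X1\<^sup>2 - a1c)"
    using dp den p X1p by (intro divide_left_mono) (auto intro!: mult_pos_pos)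
  hence g: "1 - 4*p*X1 / (2 * X1\<^sup>2 - a1c) \<le> 1 - 4*p*X1 / ((p + X1)\<^sup>2 + (Im (rr \<omega>1 km))\<^sup>2)" by simp
  have LX: "L * X1 / \<nu> = a / 2"
  proof -
    have "L * X1 / \<nu> = (L / \<nu>) * X1" by simp
    also have "\<dots> = a^3 / (8 * A0) * X1" using p0_props(4)[OF L] by (simp add: a_def)
    also have "\<dots> = a / 2" using ap Ap by (simp add: X1_def field_simps power2_eq_square power3_eq_cube)
    finally show ?thesis .
  qed
  have "(nr L (complex_of_real p) \<omega>1 km)\<^sup>2 = (1 - 4*p*X1 / ((p + X1)\<^sup>2 + (Im (rr \<omega>1 km))\<^sup>2)) * exp (- (L * X1 / \<nu>))"
    using nr_real_sq[where \<omega>=\<omega>1 and k=km and p=p and L=L, OF dp0] w1(2) by simp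
  hence "(nr L (complex_of_real p) \<omega>1 km)\<^sup>2 \<ge> (1 - 4*p*X1 / (2 * X1\<^sup>2 - a1c)) * exp (- (a / 2))"
    using g LX by (simp add: mult_right_mono)
  moreover have "nr L (complex_of_real p) \<omega>1 km \<le> fr L p" using nr_le_fr[OF _ _ w1(1)] L p by simp
  hence "(nr L (complex_of_real p) \<omega>1 km)\<^sup>2 \<le> (fr L p)\<^sup>2" by (intro power_mono) simp_all
  ultimately show ?thesis by (simp add: a_def X1_def)
qed

end

definition hiF :: "real \<Rightarrow> real" where "hiF a = a / (1 - exp (-(a - a\<^sup>2) + a^3/32))"
definition loF :: "real \<Rightarrow> real" where "loF a = (1 - exp (-a/2 + a\<^sup>2)) * (2/a - a\<^sup>2)"
definition RlF :: "real \<Rightarrow> real" where "RlF a = 2 * loF a * (1 - exp (-(a - a\<^sup>2)/2)) / a"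
definition RhF :: "real \<Rightarrow> real" where "RhF a = 2 * hiF a * (1 - sqrt ((1 - a / loF a) * exp (- (a^3/32)))) / a"

lemma lims: "(hiF \<longlongrightarrow> 1) (at_right 0)" "(loF \<longlongrightarrow> 1) (at_right 0)" "(RlF \<longlongrightarrow> 1) (at_right 0)" "(RhF \<longlongrightarrow> 1) (at_right 0)"
  unfolding hiF_def loF_def RlF_def RhF_def by real_asymp+

lemma evs: "eventually (\<lambda>a::real. a - a\<^sup>2 - a^3/32 > 0 \<and> a/2 - a\<^sup>2 > 0 \<and> loF a > a) (at_right 0)"
proof -
  have "eventually (\<lambda>a::real. a - a\<^sup>2 - a^3/32 > 0) (at_right 0)" by real_asymp
  moreover have "eventually (\<lambda>a::real. a/2 - a\<^sup>2 > 0) (at_right 0)" by real_asymp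
  moreover have "eventually (\<lambda>a::real. loF a > a) (at_right 0)" unfolding loF_def by real_asymp
  ultimately show ?thesis by eventually_elim auto
qed

lemma cplx_ident:
  fixes p A d :: real
  assumes "p \<noteq> 0" "A \<noteq> 0"
  shows "complex_of_real (2 * p * (1 - d) / A) = (1 - complex_of_real d) / (complex_of_real A / (2 * complex_of_real p))"
  using assms by (simp add: field_simps)

context osw begin

lemma aL_lim: "filterlim aL (at_right 0) (at_right 0)"
proof (rule tendsto_imp_filterlim_at_right)
  show ev: "eventually (\<lambda>L. aL L > 0) (at_right 0)"
    using eventually_at_right_less[of "0::real"] by eventually_elim (use p0_props in auto)
  show "(aL \<longlongrightarrow> 0) (at_right 0)"
  proof (rule order_tendstoI)
    fix e :: real assume "e < 0"
    show "eventually (\<lambda>L. e < aL L) (at_right 0)" using ev by eventually_elim (use \<open>e < 0\<close> in auto)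
  next
    fix e :: real assume e: "0 < e"
    have Ap: "A0 > 0" by (rule A0_props(1))
    define b where "b = \<nu> * e^3 / (8 * A0)"
    have b: "b > 0" using e nu_pos Ap by (simp add: b_def)
    show "eventually (\<lambda>L. aL L < e) (at_right 0)"
      unfolding eventually_at_right_field
    proof (intro exI[of _ b] conjI b allI impI)
      fix L :: real assume L: "0 < L" "L < b"
      have "(aL L)^3 = 8 * A0 * (L / \<nu>)" using p0_props(4)[OF L(1)] Ap by (simp add: field_simps)
      also have "\<dots> < 8 * A0 * (b / \<nu>)" using L nu_pos Ap by (simp add: divide_strict_right_mono)
      also have "\<dots> = e^3" using nu_pos Ap by (simp add: b_def)
      finally have "(aL L)^3 < e^3" .
      thus "aL L < e" by (rule power_less_imp_less_base) (use e in simp)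
    qed
  qed
qed


lemma X1_big:
  assumes ap: "a > 0" and ak: "a \<le> kap"
  shows "(4 * A0 / a\<^sup>2)\<^sup>2 \<ge> 16 * (a1c + b1c + 1)" "a * a1c \<le> A0\<^sup>2"
proof -
  define X1 where "X1 = 4 * A0 / a\<^sup>2"
  have Ap: "A0 > 0" by (rule A0_props(1))
  have a1: "a1c \<ge> 0" and b1: "b1c \<ge> 0" using x0_nn nu_pos wm_pos km_nn by (simp_all add: a1c_def b1c_def)
  have a_le1: "a \<le> 1" and a_le: "a \<le> A0\<^sup>2 / (a1c + b1c + 1)" using ak by (simp_all add: kap_def)
  have a4: "a^4 \<le> a" using power_decreasing[of 1 4 a] ap a_le1 by simp
  have aa: "a * (a1c + b1c + 1) \<le> A0\<^sup>2" using a_le a1 b1 by (simp add: field_simps)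
  have "a * a1c \<le> a * (a1c + b1c + 1)" using ap b1 by (intro mult_left_mono) auto
  thus "a * a1c \<le> A0\<^sup>2" using aa by linarith
  have "a^4 * (a1c + b1c + 1) \<le> A0\<^sup>2"
  proof -
    have "a^4 * (a1c + b1c + 1) \<le> a * (a1c + b1c + 1)" using a4 a1 b1 by (intro mult_right_mono) auto
    thus ?thesis using aa by linarith
  qed
  moreover have "X1\<^sup>2 = 16 * A0\<^sup>2 / a^4" by (simp add: X1_def power_divide power_mult_distrib power2_eq_square[of a] power4_eq_xxxx)
  ultimately have "16 * (a1c + b1c + 1) * a^4 \<le> X1\<^sup>2 * a^4" using ap by (simp add: field_simps)
  hence "16 * (a1c + b1c + 1) \<le> X1\<^sup>2" by (rule mult_right_le_imp_le) (use ap in simp)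
  thus "(4 * A0 / a\<^sup>2)\<^sup>2 \<ge> 16 * (a1c + b1c + 1)" by (simp add: X1_def)
qed

lemma bounds_at_L:
  assumes L: "L > 0" and ak: "aL L \<le> kap"
    and P1: "aL L - (aL L)\<^sup>2 - (aL L)^3/32 > 0" and P2: "aL L/2 - (aL L)\<^sup>2 > 0" and P3: "loF (aL L) > aL L"
    and p: "p > 0" and Fp: "F L (complex_of_real p) \<le> ereal (exp (- (aL L - (aL L)\<^sup>2) / 2))"
  shows "loF (aL L) \<le> p / p0 L" "p / p0 L \<le> hiF (aL L)"
    "RlF (aL L) \<le> 2 * p * (1 - fr L p) / A0" "2 * p * (1 - fr L p) / A0 \<le> RhF (aL L)"
proof -
  define a where "a = aL L"
  define \<delta> where "\<delta> = fr L p"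
  define \<delta>0 where "\<delta>0 = exp (- (a - a\<^sup>2) / 2)"
  define \<rho> where "\<rho> = p * a / A0"
  have ap: "a > 0" using p0_props[OF L] by (simp add: a_def)
  have Ap: "A0 > 0" by (rule A0_props(1))
  have pa: "p0 L = A0 / a" using p0_props[OF L] by (simp add: a_def)
  have rho: "p / p0 L = \<rho>" using pa ap Ap by (simp add: \<rho>_def)
  have rho_p: "\<rho> > 0" using p ap Ap by (simp add: \<rho>_def)
  have dd: "\<delta> \<le> \<delta>0" using Fp F_fr[of L p] L p by (simp add: \<delta>_def \<delta>0_def a_def)
  have d0: "\<delta> \<ge> 0" using fr_bounds[of L p] L p by (simp add: \<delta>_def)
  have a3: "a^3/32 > 0" using ap by simp
  have aa: "a - a\<^sup>2 > 0" using P1 a3 unfolding a_def by linarith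
  have d01: "\<delta>0 < 1" using aa by (simp add: \<delta>0_def)
  have dsq: "\<delta>\<^sup>2 \<le> exp (- (a - a\<^sup>2))"
  proof -
    have "\<delta>\<^sup>2 \<le> \<delta>0\<^sup>2" using dd d0 by (intro power_mono) auto
    also have "\<delta>0\<^sup>2 = exp (- (a - a\<^sup>2))" by (simp add: \<delta>0_def power2_eq_square exp_add[symmetric])
    finally show ?thesis .
  qed
  have ll: "\<delta>\<^sup>2 \<ge> (1 - A0 / p) * exp (- (a^3 / 32))" using lower_low[OF L p] by (simp add: \<delta>_def a_def)
  define E1 where "E1 = exp (-(a - a\<^sup>2) + a^3/32)"
  have E1: "E1 < 1" using P1 by (simp add: E1_def a_def)
  have l1: "1 - A0 / p \<le> E1"
  proof -
    have "(1 - A0 / p) * exp (- (a^3 / 32)) \<le> exp (- (a - a\<^sup>2))" using ll dsq by linarith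
    hence "(1 - A0 / p) * exp (- (a^3 / 32)) * exp (a^3/32) \<le> exp (- (a - a\<^sup>2)) * exp (a^3/32)"
      by (rule mult_right_mono) simp
    thus ?thesis by (simp add: E1_def exp_add[symmetric] mult.assoc)
  qed
  have Ap1: "A0 / p \<ge> 1 - E1" using l1 by simp
  have E1p: "1 - E1 > 0" using E1 by simp
  have rho_eq: "\<rho> = a / (A0 / p)" using p Ap by (simp add: \<rho>_def)
  have hi: "\<rho> \<le> hiF a"
  proof -
    have "a / (A0 / p) \<le> a / (1 - E1)" using Ap1 E1p ap Ap p by (intro divide_left_mono) auto
    thus ?thesis unfolding rho_eq hiF_def E1_def .
  qed
  define X1 where "X1 = 4 * A0 / a\<^sup>2"
  define Den where "Den = 2 * X1\<^sup>2 - a1c"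
  define Q where "Q = 4 * p * X1 / Den"
  have a1: "a1c \<ge> 0" and b1: "b1c \<ge> 0" using x0_nn nu_pos wm_pos km_nn by (simp_all add: a1c_def b1c_def)
  have XB: "X1\<^sup>2 \<ge> 16 * (a1c + b1c + 1)" using X1_big(1)[OF ap] ak by (simp add: X1_def a_def)
  have aA: "a * a1c \<le> A0\<^sup>2" using X1_big(2)[OF ap] ak by (simp add: a_def)
  have X1p: "X1 > 0" using Ap ap by (simp add: X1_def)
  have Denp: "Den > 0"
  proof -
    have "16*a1c + 16*b1c + 16 \<le> X1\<^sup>2" using XB by simp
    thus ?thesis using a1 b1 by (simp add: Den_def)
  qed
  have lh: "\<delta>\<^sup>2 \<ge> (1 - Q) * exp (- (a / 2))"
    using lower_high[OF L p ak] by (simp add: \<delta>_def a_def Q_def Den_def X1_def)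
  define E2 where "E2 = exp (-a/2 + a\<^sup>2)"
  have E2: "E2 < 1" using P2 by (simp add: E2_def a_def)
  have l2: "1 - Q \<le> E2"
  proof -
    have "(1 - Q) * exp (- (a / 2)) \<le> exp (- (a - a\<^sup>2))" using lh dsq by linarith
    hence "(1 - Q) * exp (- (a / 2)) * exp (a / 2) \<le> exp (- (a - a\<^sup>2)) * exp (a / 2)"
      by (rule mult_right_mono) simp
    moreover have "- (a - a\<^sup>2) + a / 2 = -a/2 + a\<^sup>2" by simp
    ultimately show ?thesis by (simp add: E2_def exp_add[symmetric] mult.assoc)
  qed
  have QE: "Q \<ge> 1 - E2" using l2 by simp
  have E2p: "1 - E2 > 0" using E2 by simp
  have p_eq: "p = Q * Den / (4 * X1)" using Denp X1p by (simp add: Q_def)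
  have "\<rho> = Q * (Den * a / (4 * X1 * A0))" unfolding \<rho>_def p_eq by (simp add: field_simps)
  also have "Den * a / (4 * X1 * A0) = 2/a - a1c * a^3 / (16 * A0\<^sup>2)"
    using ap Ap by (simp add: Den_def X1_def field_simps power2_eq_square power3_eq_cube)
  finally have rho2: "\<rho> = Q * (2/a - a1c * a^3 / (16 * A0\<^sup>2))" .
  have small: "a1c * a^3 / (16 * A0\<^sup>2) \<le> a\<^sup>2"
  proof -
    have "a1c * a^3 = (a * a1c) * a\<^sup>2" by (simp add: power2_eq_square power3_eq_cube)
    also have "\<dots> \<le> A0\<^sup>2 * a\<^sup>2" using aA by (intro mult_right_mono) auto
    also have "\<dots> \<le> 16 * A0\<^sup>2 * a\<^sup>2" by simp
    finally show ?thesis using Ap by (simp add: field_simps)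
  qed
  have lo: "loF a \<le> \<rho>"
  proof -
    have pos: "2/a - a\<^sup>2 > 0"
    proof -
      have "loF a > 0" using P3 ap by (simp add: a_def)
      thus ?thesis using E2p by (simp add: loF_def E2_def zero_less_mult_iff)
    qed
    have "loF a = (1 - E2) * (2/a - a\<^sup>2)" by (simp add: loF_def E2_def)
    also have "\<dots> \<le> Q * (2/a - a1c * a^3 / (16 * A0\<^sup>2))"
      using QE small pos E2p by (intro mult_mono) auto
    finally show ?thesis using rho2 by simp
  qed
  show "loF (aL L) \<le> p / p0 L" using lo rho by (simp add: a_def)
  show "p / p0 L \<le> hiF (aL L)" using hi rho by (simp add: a_def)
  have R_eq: "2 * p * (1 - \<delta>) / A0 = 2 * \<rho> * (1 - \<delta>) / a" using ap Ap by (simp add: \<rho>_def field_simps)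
  have loFp: "loF a > 0" using P3 ap by (simp add: a_def)
  have "RlF a = 2 * loF a * (1 - \<delta>0) / a" by (simp add: RlF_def \<delta>0_def)
  also have "\<dots> \<le> 2 * \<rho> * (1 - \<delta>) / a"
  proof -
    have "loF a * (1 - \<delta>0) \<le> \<rho> * (1 - \<delta>)" using lo dd d01 loFp by (intro mult_mono) auto
    thus ?thesis using ap by (simp add: divide_right_mono)
  qed
  finally show "RlF (aL L) \<le> 2 * p * (1 - fr L p) / A0" using R_eq by (simp add: a_def \<delta>_def)
  define S where "S = (1 - a / loF a) * exp (- (a^3/32))"
  have aloF: "a / loF a < 1" using P3 loFp by (simp add: a_def)
  have S0: "S \<ge> 0" using aloF by (simp add: S_def)
  have "A0 / p = a / \<rho>" using p Ap ap by (simp add: \<rho>_def)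
  also have "\<dots> \<le> a / loF a" using lo loFp ap by (intro divide_left_mono) auto
  finally have "1 - A0 / p \<ge> 1 - a / loF a" by simp
  hence "(1 - A0 / p) * exp (- (a^3 / 32)) \<ge> S" unfolding S_def by (intro mult_right_mono) auto
  hence "S \<le> \<delta>\<^sup>2" using ll by linarith
  hence "sqrt S \<le> sqrt (\<delta>\<^sup>2)" by (rule real_sqrt_le_mono)
  hence sd: "sqrt S \<le> \<delta>" using d0 by simp
  have "2 * \<rho> * (1 - \<delta>) / a \<le> 2 * hiF a * (1 - sqrt S) / a"
  proof -
    have "\<rho> * (1 - \<delta>) \<le> hiF a * (1 - sqrt S)" using hi sd rho_p dd d01 by (intro mult_mono) auto
    thus ?thesis using ap by (simp add: divide_right_mono)
  qed
  also have "\<dots> = RhF a" by (simp add: RhF_def S_def)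
  finally show "2 * p * (1 - fr L p) / A0 \<le> RhF (aL L)" using R_eq by (simp add: a_def \<delta>_def)
qed


definition EV where "EV L \<longleftrightarrow> L > 0 \<and> aL L \<le> kap \<and> aL L - (aL L)\<^sup>2 - (aL L)^3/32 > 0 \<and> aL L/2 - (aL L)\<^sup>2 > 0 \<and> loF (aL L) > aL L"

lemma ev_EV: "eventually EV (at_right 0)"
proof -
  have e1: "eventually (\<lambda>L::real. L > 0) (at_right 0)" by (rule eventually_at_right_less)
  have "eventually (\<lambda>a::real. a < kap) (at_right 0)"
    unfolding eventually_at_right_field using kap_pos by (intro exI[of _ kap]) auto
  hence e2: "eventually (\<lambda>L. aL L < kap) (at_right 0)" using aL_lim by (rule eventually_compose_filterlim)
  have e3: "eventually (\<lambda>L. aL L - (aL L)\<^sup>2 - (aL L)^3/32 > 0 \<and> aL L/2 - (aL L)\<^sup>2 > 0 \<and> loF (aL L) > aL L) (at_right 0)"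
    using evs aL_lim by (rule eventually_compose_filterlim)
  show ?thesis using e1 e2 e3 by eventually_elim (auto simp: EV_def)
qed

definition Qm where "Qm L p \<longleftrightarrow> p > 0 \<and> F L (complex_of_real p) \<le> ereal (exp (- (aL L - (aL L)\<^sup>2) / 2)) \<and>
   (\<forall>q. F L (complex_of_real p) \<le> F L q \<and> (F L q = F L (complex_of_real p) \<longrightarrow> q = complex_of_real p))"

lemma Qm_exists: "EV L \<Longrightarrow> \<exists>p. Qm L p"
proof -
  assume ev: "EV L"
  hence L: "L > 0" and P1: "aL L - (aL L)\<^sup>2 - (aL L)^3/32 > 0" by (simp_all add: EV_def)
  have Ap: "A0 > 0" by (rule A0_props(1))
  have La: "L / \<nu> = (aL L)^3 / (8 * A0)" using p0_props[OF L] by simp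
  have ex: "L * (Aconst \<nu> c x0sq \<omega>m km / 4) / (2 * \<nu>) = (aL L)^3 / 64"
  proof -
    have "L * (Aconst \<nu> c x0sq \<omega>m km / 4) / (2 * \<nu>) = (L / \<nu>) * (A0 / 8)" by (simp add: A0_def)
    also have "\<dots> = (aL L)^3 / 64" unfolding La using Ap by simp
    finally show ?thesis .
  qed
  have t1: "exp (- (aL L - (aL L)\<^sup>2) / 2) * exp (L * (Aconst \<nu> c x0sq \<omega>m km / 4) / (2 * \<nu>)) < 1"
  proof -
    have "exp (- (aL L - (aL L)\<^sup>2) / 2) * exp (L * (Aconst \<nu> c x0sq \<omega>m km / 4) / (2 * \<nu>))
        = exp (- (aL L - (aL L)\<^sup>2) / 2 + (aL L)^3 / 64)" by (simp only: ex exp_add)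
    also have "\<dots> < 1"
    proof -
      have "- (aL L - (aL L)\<^sup>2) / 2 + (aL L)^3 / 64 = - (aL L - (aL L)\<^sup>2 - (aL L)^3/32) / 2" by simp
      also have "\<dots> < 0" using P1 by simp
      finally show ?thesis by simp
    qed
    finally show ?thesis .
  qed
  obtain p where "p > 0" "F L (complex_of_real p) \<le> ereal (exp (- (aL L - (aL L)\<^sup>2) / 2))"
      "\<forall>q. F L (complex_of_real p) \<le> F L q \<and> (F L q = F L (complex_of_real p) \<longrightarrow> q = complex_of_real p)"
    using fixed_L[OF L p0_props(1)[OF L] _ upper_p0[OF L] t1] by auto
  thus ?thesis unfolding Qm_def by blast
qed

theorem main_loc:
  "\<exists>L0 > 0. \<exists>pstar :: real \<Rightarrow> complex.
     (\<forall>L \<in> {0<..<L0}. F L (pstar L) < \<infinity> \<and> (\<forall>q. F L (pstar L) \<le> F L q \<and> (F L q = F L (pstar L) \<longrightarrow> q = pstar L)))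
     \<and> (pstar \<sim>[at_right 0] (\<lambda>L. complex_of_real ((1/2) * root 3 (\<nu> * A0\<^sup>2 / L))))
     \<and> ((\<lambda>L. 1 - complex_of_real (real_of_ereal (F L (pstar L)))) \<sim>[at_right 0] (\<lambda>L. complex_of_real A0 / (2 * pstar L)))"
proof -
  obtain L0 where L0: "L0 > 0" "\<And>L. 0 < L \<Longrightarrow> L < L0 \<Longrightarrow> EV L"
    using ev_EV unfolding eventually_at_right_field by auto
  define ps where "ps L = (SOME p. Qm L p)" for L
  define pstar where "pstar L = complex_of_real (ps L)" for L
  have Q: "Qm L (ps L)" if "EV L" for L unfolding ps_def using Qm_exists[OF that] by (rule someI_ex)
  have part1: "\<forall>L \<in> {0<..<L0}. F L (pstar L) < \<infinity> \<and> (\<forall>q. F L (pstar L) \<le> F L q \<and> (F L q = F L (pstar L) \<longrightarrow> q = pstar L))"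
  proof
    fix L assume "L \<in> {0<..<L0}"
    hence q: "Qm L (ps L)" using L0 Q by auto
    have le: "F L (pstar L) \<le> ereal (exp (- (aL L - (aL L)\<^sup>2) / 2))" using q unfolding Qm_def pstar_def by blast
    have "ereal (exp (- (aL L - (aL L)\<^sup>2) / 2)) < \<infinity>" by simp
    hence "F L (pstar L) < \<infinity>" using le by (rule order_le_less_trans[rotated])
    thus "F L (pstar L) < \<infinity> \<and> (\<forall>q. F L (pstar L) \<le> F L q \<and> (F L q = F L (pstar L) \<longrightarrow> q = pstar L))"
      using q unfolding Qm_def pstar_def by blast
  qed
  have evEV: "eventually EV (at_right 0)" by (rule ev_EV)
  have bnd: "eventually (\<lambda>L. loF (aL L) \<le> ps L / p0 L \<and> ps L / p0 L \<le> hiF (aL L) \<and>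
      RlF (aL L) \<le> 2 * ps L * (1 - fr L (ps L)) / A0 \<and> 2 * ps L * (1 - fr L (ps L)) / A0 \<le> RhF (aL L) \<and> ps L > 0) (at_right 0)"
    using evEV
  proof eventually_elim
    case (elim L)
    have q: "Qm L (ps L)" by (rule Q[OF elim])
    from elim have L: "L > 0" and ak: "aL L \<le> kap" and P1: "aL L - (aL L)\<^sup>2 - (aL L)^3/32 > 0"
      and P2: "aL L/2 - (aL L)\<^sup>2 > 0" and P3: "loF (aL L) > aL L" by (simp_all add: EV_def)
    have pp: "ps L > 0" and Fp: "F L (complex_of_real (ps L)) \<le> ereal (exp (- (aL L - (aL L)\<^sup>2) / 2))"
      using q by (simp_all add: Qm_def)
    note b = bounds_at_L[OF L ak P1 P2 P3 pp Fp]
    show ?case using b pp by simp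
  qed
  have lim_comp: "((\<lambda>L. f (aL L)) \<longlongrightarrow> 1) (at_right 0)" if "(f \<longlongrightarrow> 1) (at_right 0)" for f
    using filterlim_compose[OF that aL_lim] .
  have r1: "((\<lambda>L. ps L / p0 L) \<longlongrightarrow> 1) (at_right 0)"
    by (rule tendsto_sandwich[OF _ _ lim_comp[OF lims(2)] lim_comp[OF lims(1)]])
       (use bnd in \<open>auto elim: eventually_mono\<close>)
  have r2: "((\<lambda>L. 2 * ps L * (1 - fr L (ps L)) / A0) \<longlongrightarrow> 1) (at_right 0)"
    by (rule tendsto_sandwich[OF _ _ lim_comp[OF lims(3)] lim_comp[OF lims(4)]])
       (use bnd in \<open>auto elim: eventually_mono\<close>)
  have Ap: "A0 > 0" by (rule A0_props(1))
  have part2: "pstar \<sim>[at_right 0] (\<lambda>L. complex_of_real ((1/2) * root 3 (\<nu> * A0\<^sup>2 / L)))"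
  proof (rule asymp_equivI')
    have "((\<lambda>L. complex_of_real (ps L / p0 L)) \<longlongrightarrow> complex_of_real 1) (at_right 0)"
      by (rule tendsto_of_real[OF r1])
    hence lim: "((\<lambda>L. complex_of_real (ps L / p0 L)) \<longlongrightarrow> 1) (at_right 0)" by simp
    show "((\<lambda>L. pstar L / complex_of_real ((1/2) * root 3 (\<nu> * A0\<^sup>2 / L))) \<longlongrightarrow> 1) (at_right 0)"
      by (rule Lim_transform_eventually[OF lim]) (simp add: pstar_def p0_def)
  qed
  have part3: "(\<lambda>L. 1 - complex_of_real (real_of_ereal (F L (pstar L)))) \<sim>[at_right 0] (\<lambda>L. complex_of_real A0 / (2 * pstar L))"
  proof (rule asymp_equivI')
    have "((\<lambda>L. complex_of_real (2 * ps L * (1 - fr L (ps L)) / A0)) \<longlongrightarrow> complex_of_real 1) (at_right 0)"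
      by (rule tendsto_of_real[OF r2])
    hence lim: "((\<lambda>L. complex_of_real (2 * ps L * (1 - fr L (ps L)) / A0)) \<longlongrightarrow> 1) (at_right 0)" by simp
    show "((\<lambda>L. (1 - complex_of_real (real_of_ereal (F L (pstar L)))) / (complex_of_real A0 / (2 * pstar L))) \<longlongrightarrow> 1) (at_right 0)"
    proof (rule Lim_transform_eventually[OF lim])
      show "eventually (\<lambda>L. complex_of_real (2 * ps L * (1 - fr L (ps L)) / A0) =
              (1 - complex_of_real (real_of_ereal (F L (pstar L)))) / (complex_of_real A0 / (2 * pstar L))) (at_right 0)"
        using bnd
      proof eventually_elim
        case (elim L)
        hence pp: "ps L > 0" by simp
        have e: "real_of_ereal (F L (complex_of_real (ps L))) = fr L (ps L)" by (simp add: fr_def)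
        show ?case unfolding pstar_def e by (rule cplx_ident) (use pp Ap in auto)
      qed
    qed
  qed
  show ?thesis using L0(1) part1 part2 part3 by blast
qed

end

theorem theorem2:
  fixes \<nu> b a c km \<omega>m :: real
  assumes "\<nu> > 0" and "b \<ge> 0" and "km \<ge> 0" and "\<omega>m > 0"
  defines "x0sq \<equiv> a\<^sup>2 + 4 * \<nu> * b"
  defines "A \<equiv> Aconst \<nu> c x0sq \<omega>m km"
  shows "\<exists>L0 > 0. \<exists>pstar :: real \<Rightarrow> complex.
           (\<forall>L \<in> {0<..<L0}.
              robin_sup \<nu> c x0sq \<omega>m km L (pstar L) < \<infinity> \<and>
              (\<forall>q. robin_sup \<nu> c x0sq \<omega>m km L (pstar L) \<le> robin_sup \<nu> c x0sq \<omega>m km L q \<and>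
                   (robin_sup \<nu> c x0sq \<omega>m km L q = robin_sup \<nu> c x0sq \<omega>m km L (pstar L) \<longrightarrow> q = pstar L)))
         \<and> (pstar \<sim>[at_right 0] (\<lambda>L. complex_of_real ((1/2) * root 3 (\<nu> * A\<^sup>2 / L))))
         \<and> ((\<lambda>L. 1 - complex_of_real (real_of_ereal (robin_sup \<nu> c x0sq \<omega>m km L (pstar L))))
              \<sim>[at_right 0] (\<lambda>L. complex_of_real A / (2 * pstar L)))"
proof -
  have x0: "x0sq \<ge> 0" using assms(1,2) by (simp add: x0sq_def)
  interpret osw \<nu> c x0sq \<omega>m km by unfold_locales (use assms x0 in auto)
  have AA: "A = A0" by (simp add: A_def A0_def)
  show ?thesis unfolding AA by (rule main_loc)
qed

end
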